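(* Let $\{x^k\}_k$, $\{z^k\}_k$ be generated by the normal map-based stochastic proximal gradient method described in the context and suppose conditions (A.1), (A.2), (A.3) and (B.1) hold. Assume moreover $\alpha_k\in(0,\mathsf T/5]$ for all $k\in\mathbb N$. Then for all $k\ge1$, \[ \min_{i=0,\dots,k-1}\mathbb E[\|F^\lambda_{\mathrm{nat}}(x^i)\|^2]\le\frac{D_1[H_\xi(z^0)-\bar\psi]}{\sum_{i=0}^{k-1}\alpha_i}+\frac{D_2\sum_{i=0}^{k-1}\alpha_i^2\sigma_i^2}{\sum_{i=0}^{k-1}\alpha_i}, \] where $D_1:=10(1+\lambda\bar\lambda)^2\lambda^2\xi^{-1}$ and $D_2:=\max\{200(1+\lambda\bar\lambda)^2\lambda^2(\mathsf T\xi)^{-1},\,8\lambda^2\bar\lambda^2\mathsf T\}$.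
   Context: Let $\varphi:\mathbb{R}^d\to(-\infty,\infty]$ be convex, lower semicontinuous and proper, let $f:\mathbb{R}^d\to\mathbb{R}$ be continuously differentiable, and set $\psi=f+\varphi$. For $\lambda>0$ let $\mathrm{prox}_{\lambda\varphi}(x)=\operatorname{argmin}_y\{\varphi(y)+\frac{1}{2\lambda}\|x-y\|^2\}$, $\mathrm{env}_{\lambda\varphi}$ the Moreau envelope with $\nabla\mathrm{env}_{\lambda\varphi}(x)=(x-\mathrm{prox}_{\lambda\varphi}(x))/\lambda$, $F^\lambda_{\mathrm{nor}}(z)=\nabla f(\mathrm{prox}_{\lambda\varphi}(z))+\frac1\lambda(z-\mathrm{prox}_{\lambda\varphi}(z))$, $F^\lambda_{\mathrm{nat}}(x)=x-\mathrm{prox}_{\lambda\varphi}(x-\lambda\nabla f(x))$, and the merit function $H_\xi(z)=\psi(\mathrm{prox}_{\lambda\varphi}(z))+\frac{\xi\lambda}2\|F^\lambda_{\mathrm{nor}}(z)\|^2$. Method: on a filtered probability space $(\Omega,\mathcal F,\{\mathcal F_k\}_k,\mathbb P)$, with $\lambda>0$, step sizes $\alpha_k>0$, deterministic $z^0$, $x^0=\mathrm{prox}_{\lambda\varphi}(z^0)$, and $\mathcal F_{k+1}$-measurable random vectors $g^k$, set $z^{k+1}=z^k-\alpha_k(g^k+\nabla\mathrm{env}_{\lambda\varphi}(z^k))$, $x^{k+1}=\mathrm{prox}_{\lambda\varphi}(z^{k+1})$. Let $e^k=g^k-\nabla f(x^k)$. Conditions: (A.1) There is $\bar\psi\in\mathbb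 R$ with $\psi\ge\bar\psi$ on $\mathrm{dom}\,\varphi$. (A.2) $\mathbb E[g^k\mid\mathcal F_k]=\nabla f(x^k)$ a.s. and there is $\{\sigma_k\}_k\subseteq\mathbb R_+$ with $\mathbb E[\|e^k\|^2]\le\sigma_k^2$ for all $k$. (A.3) $\sum_k\alpha_k=\infty$ and $\alpha_k\to0$. (B.1) $\nabla f$ is Lipschitz continuous on $\mathbb R^d$ with modulus $\mathsf L>0$. Constants: $\xi:=(2+2\mathsf L^2\lambda^2)^{-1}$, $\bar\lambda:=(\mathsf L+2\lambda^{-1})\exp(\mathsf L\lambda+2)$, and $\mathsf T:=\sup\{t\ge0:\ t\le\min\{\tfrac{4\lambda}5,1\},\ \tfrac1{2t}\ge\xi(4\mathsf L-\lambda^{-1})+\mathsf L,\ \mathsf L\bar\lambda^2t^2+5\bar\lambda^2t\le\tfrac{8\xi}{25\lambda},\ [\tfrac5t+\mathsf L](1+\bar\lambda t)^2\le\tfrac{10}t\}$. *)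

theory Defs
  imports "HOL-Analysis.Analysis" "HOL-Probability.Probability"
begin

definition ext_convex :: "('a::real_vector \<Rightarrow> ereal) \<Rightarrow> bool" where
  "ext_convex \<phi> \<longleftrightarrow> (\<forall>x y t. 0 \<le> t \<and> t \<le> 1 \<longrightarrow>
      \<phi> ((1 - t) *\<^sub>R x + t *\<^sub>R y) \<le> ereal (1 - t) * \<phi> x + ereal t * \<phi> y)"

definition ext_lsc :: "('a::topological_space \<Rightarrow> ereal) \<Rightarrow> bool" where
  "ext_lsc \<phi> \<longleftrightarrow> (\<forall>x. \<phi> x \<le> Liminf (at x) \<phi>)"

definition ext_proper :: "('a \<Rightarrow> ereal) \<Rightarrow> bool" where
  "ext_proper \<phi> \<longleftrightarrow> (\<forall>x. \<phi> x \<noteq> -\<infinity>) \<and> (\<exists>x. \<phi> x \<noteq> \<infinity>)"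

definition prox :: "real \<Rightarrow> ('a::real_normed_vector \<Rightarrow> ereal) \<Rightarrow> 'a \<Rightarrow> 'a" where
  "prox lam \<phi> x = (THE y. \<forall>w. \<phi> y + ereal (norm (x - y)^2 / (2 * lam))
                              \<le> \<phi> w + ereal (norm (x - w)^2 / (2 * lam)))"

definition grad_env :: "real \<Rightarrow> ('a::real_normed_vector \<Rightarrow> ereal) \<Rightarrow> 'a \<Rightarrow> 'a" where
  "grad_env lam \<phi> x = (1 / lam) *\<^sub>R (x - prox lam \<phi> x)"

definition F_nor :: "real \<Rightarrow> ('a::real_normed_vector \<Rightarrow> ereal) \<Rightarrow> ('a \<Rightarrow> 'a) \<Rightarrow> 'a \<Rightarrow> 'a" where
  "F_nor lam \<phi> gf z = gf (prox lam \<phi> z) + (1 / lam) *\<^sub>R (z - prox lam \<phi> z)"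

definition F_nat :: "real \<Rightarrow> ('a::real_normed_vector \<Rightarrow> ereal) \<Rightarrow> ('a \<Rightarrow> 'a) \<Rightarrow> 'a \<Rightarrow> 'a" where
  "F_nat lam \<phi> gf x = x - prox lam \<phi> (x - lam *\<^sub>R gf x)"

text \<open>Merit function \<open>H_\<xi>(z) = \<psi>(prox z) + \<xi>\<lambda>/2 \<parallel>F_nor(z)\<parallel>^2\<close> with \<open>\<psi> = f + \<phi>\<close>
  (\<open>\<phi>(prox z)\<close> is finite, so \<open>real_of_ereal\<close> is harmless).\<close>
definition H_merit :: "real \<Rightarrow> real \<Rightarrow> ('a::real_normed_vector \<Rightarrow> real) \<Rightarrow> ('a \<Rightarrow> 'a)
    \<Rightarrow> ('a \<Rightarrow> ereal) \<Rightarrow> 'a \<Rightarrow> real" where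
  "H_merit xi lam f gf \<phi> z =
     f (prox lam \<phi> z) + real_of_ereal (\<phi> (prox lam \<phi> z))
     + xi * lam / 2 * (norm (F_nor lam \<phi> gf z))^2"

definition xi_const :: "real \<Rightarrow> real \<Rightarrow> real" where
  "xi_const L lam = 1 / (2 + 2 * L^2 * lam^2)"

definition lambar_const :: "real \<Rightarrow> real \<Rightarrow> real" where
  "lambar_const L lam = (L + 2 / lam) * exp (L * lam + 2)"

definition T_const :: "real \<Rightarrow> real \<Rightarrow> real" where
  "T_const L lam = (let xi = xi_const L lam; lb = lambar_const L lam in
     Sup {t. 0 < t \<and> t \<le> min (4 * lam / 5) 1
             \<and> 1 / (2 * t) \<ge> xi * (4 * L - 1 / lam) + L
             \<and> L * lb^2 * t^2 + 5 * lb^2 * t \<le> 8 * xi / (25 * lam)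
             \<and> (5 / t + L) * (1 + lb * t)^2 \<le> 10 / t})"

end

theory Submission
  imports Defs
begin

definition lscn :: "('a::metric_space \<Rightarrow> ereal) \<Rightarrow> bool" where
  "lscn h \<longleftrightarrow> (\<forall>v c. ereal c < h v \<longrightarrow> (\<exists>e>0. \<forall>u. dist u v < e \<longrightarrow> ereal c < h u))"

lemma ext_lsc_lscn:
  fixes \<phi> :: "'a::metric_space \<Rightarrow> ereal"
  assumes "ext_lsc \<phi>" shows "lscn \<phi>"
  unfolding lscn_def
proof (intro allI impI)
  fix v c assume c: "ereal c < \<phi> v"
  have "\<phi> v \<le> Liminf (at v) \<phi>" using assms unfolding ext_lsc_def by blast
  then have "eventually (\<lambda>u. ereal c < \<phi> u) (at v)"
    using c le_Liminf_iff by blast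
  then obtain d where d: "d > 0" "\<And>u. u \<noteq> v \<Longrightarrow> dist u v < d \<Longrightarrow> ereal c < \<phi> u"
    unfolding eventually_at by blast
  show "\<exists>e>0. \<forall>u. dist u v < e \<longrightarrow> ereal c < \<phi> u"
    using d c by (metis)
qed

lemma lscn_add:
  fixes \<phi> :: "'a::metric_space \<Rightarrow> ereal"
  assumes "lscn \<phi>" "continuous_on UNIV q"
  shows "lscn (\<lambda>u. \<phi> u + ereal (q u))"
  unfolding lscn_def
proof (intro allI impI)
  fix v c assume c: "ereal c < \<phi> v + ereal (q v)"
  then have "ereal (c - q v) < \<phi> v"
    by (cases "\<phi> v") auto
  then obtain r where r: "ereal (c - q v) < ereal r" "ereal r < \<phi> v" using ereal_dense2 by blast
  define eps where "eps = r - (c - q v)"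
  have eps: "eps > 0" using r(1) eps_def by simp
  obtain e1 where e1: "e1 > 0" "\<And>u. dist u v < e1 \<Longrightarrow> ereal r < \<phi> u"
    using assms(1) r(2) unfolding lscn_def by blast
  have "isCont q v" using assms(2) by (simp add: continuous_on_eq_continuous_at)
  then obtain e2 where e2: "e2 > 0" "\<And>u. dist u v < e2 \<Longrightarrow> dist (q u) (q v) < eps"
    using eps unfolding continuous_at_eps_delta by blast
  show "\<exists>e>0. \<forall>u. dist u v < e \<longrightarrow> ereal c < \<phi> u + ereal (q u)"
  proof (intro exI[of _ "min e1 e2"] conjI allI impI)
    show "min e1 e2 > 0" using e1 e2 by simp
    fix u assume "dist u v < min e1 e2"
    then have a: "ereal r < \<phi> u" and b: "dist (q u) (q v) < eps" using e1 e2 by auto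
    have "c < r + q u" using b eps_def by (simp add: dist_real_def abs_less_iff)
    then show "ereal c < \<phi> u + ereal (q u)" using a
      by (cases "\<phi> u") auto
  qed
qed

lemma lscn_attains_min:
  fixes h :: "'a::metric_space \<Rightarrow> ereal"
  assumes lsc: "lscn h" and K: "compact K" "K \<noteq> {}"
  shows "\<exists>x\<in>K. \<forall>y\<in>K. h x \<le> h y"
proof (rule ccontr)
  assume nm: "\<not> ?thesis"
  define m where "m = (INF y\<in>K. h y)"
  have mlt: "m < h x" if xK: "x \<in> K" for x
  proof -
    obtain y where "y \<in> K" "h y < h x" using nm xK by (force simp: not_le)
    moreover have "m \<le> h y" unfolding m_def using \<open>y \<in> K\<close> by (rule INF_lower)
    ultimately show ?thesis by simp
  qed
  define C where "C = {U. open U \<and> (\<exists>c::real. m < ereal c \<and> (\<forall>u\<in>U. ereal c < h u))}"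
  have cover: "K \<subseteq> \<Union>C"
  proof
    fix x assume x: "x \<in> K"
    obtain c where c: "m < ereal c" "ereal c < h x" using mlt[OF x] ereal_dense2 by blast
    obtain e where e: "e > 0" "\<And>u. dist u x < e \<Longrightarrow> ereal c < h u"
      using lsc c(2) unfolding lscn_def by blast
    have "ball x e \<in> C" unfolding C_def using c e by (auto simp: dist_commute)
    then show "x \<in> \<Union>C" using e(1) by (metis UnionI centre_in_ball)
  qed
  obtain D where D: "D \<subseteq> C" "finite D" "K \<subseteq> \<Union>D"
    using compactE[OF K(1) cover] unfolding C_def by blast
  have Dne: "D \<noteq> {}" using D(3) K(2) by auto
  have "\<exists>c::real. m < ereal c \<and> (\<forall>U\<in>D. \<forall>u\<in>U. ereal c < h u)"
    using D(2) Dne D(1)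
  proof (induction D rule: finite_ne_induct)
    case (singleton U) then show ?case unfolding C_def by auto
  next
    case (insert U D)
    then obtain c1 where c1: "m < ereal c1" "\<forall>U\<in>D. \<forall>u\<in>U. ereal c1 < h u" by auto
    from insert obtain c2 where c2: "m < ereal c2" "\<forall>u\<in>U. ereal c2 < h u" unfolding C_def by auto
    show ?case
    proof (intro exI[of _ "min c1 c2"] conjI ballI)
      show "m < ereal (min c1 c2)" using c1 c2 by (simp add: min_def)
      fix V u assume "V \<in> insert U D" "u \<in> V"
      then show "ereal (min c1 c2) < h u" using c1 c2
        by (metis insertE ereal_less_eq(3) min.cobounded1 min.cobounded2 le_less_trans)
    qed
  qed
  then obtain c where c: "m < ereal c" "\<forall>U\<in>D. \<forall>u\<in>U. ereal c < h u" by blast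
  have "ereal c \<le> m" unfolding m_def
  proof (rule INF_greatest)
    fix y assume "y \<in> K" then obtain U where "U \<in> D" "y \<in> U" using D(3) by blast
    then show "ereal c \<le> h y" using c(2) by (meson less_imp_le)
  qed
  then show False using c(1) by simp
qed

lemma norm_mid_identity:
  fixes y x1 x2 :: "'a::real_inner"
  shows "norm (y - ((1 - 1/2) *\<^sub>R x1 + (1/2) *\<^sub>R x2))^2
     = (norm (y - x1)^2 + norm (y - x2)^2) / 2 - norm (x1 - x2)^2 / 4"
  by (simp add: power2_norm_eq_inner inner_diff_left inner_diff_right inner_add_left inner_add_right
      inner_commute algebra_simps field_simps)

lemma norm_seg_identity:
  fixes y x w :: "'a::real_inner"
  shows "norm (y - ((1 - t) *\<^sub>R x + t *\<^sub>R w))^2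
     = norm (y - x)^2 - 2 * t * inner (y - x) (w - x) + t^2 * norm (w - x)^2"
proof -
  have e: "y - ((1 - t) *\<^sub>R x + t *\<^sub>R w) = (y - x) - t *\<^sub>R (w - x)" by (simp add: algebra_simps)
  show ?thesis unfolding e
    apply (simp only: power2_norm_eq_inner)
    by (simp add: inner_diff_left inner_diff_right inner_commute algebra_simps power2_eq_square)
qed

lemma prox_exists:
  fixes \<phi> :: "'a::euclidean_space \<Rightarrow> ereal"
  assumes cv: "ext_convex \<phi>" and ls: "ext_lsc \<phi>" and pr: "ext_proper \<phi>" and lam: "lam > 0"
  shows "\<exists>x. \<forall>w. \<phi> x + ereal (norm (y - x)^2 / (2*lam)) \<le> \<phi> w + ereal (norm (y - w)^2 / (2*lam))"
proof -
  have lsn: "lscn \<phi>" using ls by (rule ext_lsc_lscn)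
  obtain w0 where w0: "\<phi> w0 \<noteq> \<infinity>" using pr unfolding ext_proper_def by blast
  have nm: "\<And>u. \<phi> u \<noteq> -\<infinity>" using pr unfolding ext_proper_def by blast
  obtain p0 where p0: "\<phi> w0 = ereal p0" using w0 nm[of w0] by (cases "\<phi> w0") auto
  obtain x1 where x1: "x1 \<in> cball w0 1" "\<And>u. u \<in> cball w0 1 \<Longrightarrow> \<phi> x1 \<le> \<phi> u"
    using lscn_attains_min[OF lsn compact_cball, of w0 1] by auto
  have "\<phi> x1 \<le> \<phi> w0" using x1(2)[of w0] by simp
  then obtain mr where mr: "\<phi> x1 = ereal mr" using nm[of x1] p0 by (cases "\<phi> x1") auto
  have mrp0: "mr \<le> p0" using x1(2)[of w0] mr p0 by simp
  define K where "K = p0 - mr"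
  have K0: "K \<ge> 0" using mrp0 K_def by simp
  have lb: "ereal (mr - K * norm (u - w0)) \<le> \<phi> u" for u
  proof (cases "norm (u - w0) \<le> 1")
    case True
    then have "u \<in> cball w0 1" by (simp add: dist_norm norm_minus_commute)
    then have "ereal mr \<le> \<phi> u" using x1(2) mr by metis
    moreover have "mr - K * norm (u - w0) \<le> mr" using K0 by simp
    ultimately show ?thesis by (meson ereal_less_eq(3) order_trans)
  next
    case False
    define r where "r = norm (u - w0)"
    have r1: "r > 1" using False r_def by simp
    define t where "t = 1 / r"
    have t01: "0 \<le> t" "t \<le> 1" using r1 t_def by auto
    define v where "v = (1 - t) *\<^sub>R w0 + t *\<^sub>R u"
    have "w0 - v = t *\<^sub>R (w0 - u)" unfolding v_def by (simp add: algebra_simps)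
    then have "norm (w0 - v) = t * r" using t01 r_def by (simp add: norm_minus_commute)
    then have "v \<in> cball w0 1" using t_def r1 by (simp add: dist_norm)
    then have "ereal mr \<le> \<phi> v" using x1(2) mr by metis
    also have "\<phi> v \<le> ereal (1 - t) * \<phi> w0 + ereal t * \<phi> u"
      using cv t01 unfolding ext_convex_def v_def by blast
    finally have ineq: "ereal mr \<le> ereal (1 - t) * ereal p0 + ereal t * \<phi> u" using p0 by simp
    show ?thesis
    proof (cases "\<phi> u")
      case (real pu)
      with ineq have "mr \<le> (1 - t) * p0 + t * pu" by simp
      then have "r * mr \<le> r * ((1 - t) * p0 + t * pu)" using r1 by simp
      also have "\<dots> = (r - 1) * p0 + pu" using t_def r1 by (simp add: field_simps)
      finally have "r * mr \<le> (r - 1) * p0 + pu" .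
      then have "mr - K * r \<le> pu" unfolding K_def using r1 mrp0 by (simp add: algebra_simps)
      then show ?thesis using real r_def by simp
    next
      case PInf then show ?thesis by simp
    next
      case MInf then show ?thesis using nm by simp
    qed
  qed
  define q where "q = (\<lambda>u. norm (y - u)^2 / (2*lam))"
  define h where "h = (\<lambda>u. \<phi> u + ereal (q u))"
  have qc: "continuous_on UNIV q" unfolding q_def using lam by (intro continuous_intros) auto
  have lsh: "lscn h" unfolding h_def by (rule lscn_add[OF lsn qc])
  define h0 where "h0 = p0 + q w0"
  have hw0: "h w0 = ereal h0" unfolding h_def h0_def using p0 by simp
  define D where "D = norm (y - w0)"
  define B where "B = h0 - mr + K * D"
  define R where "R = 2 * lam * (K + \<bar>B\<bar> + 1) + 1"
  have far: "ereal h0 < h u" if uR: "norm (u - y) > R" for u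
  proof -
    define r where "r = norm (u - y)"
    have rR: "r > R" using uR r_def by simp
    have "2 * lam * (K + \<bar>B\<bar> + 1) \<ge> 0" using lam K0 by simp
    then have r1: "r > 1" using rR R_def by linarith
    have "r / (2*lam) > K + \<bar>B\<bar> + 1" using rR R_def lam by (simp add: field_simps)
    then have g: "r / (2*lam) - K > \<bar>B\<bar> + 1" by simp
    have "r * (r / (2*lam) - K) \<ge> 1 * (r / (2*lam) - K)"
      using r1 g by (intro mult_right_mono) auto
    then have key: "r^2 / (2*lam) - K * r > B" using g by (simp add: power2_eq_square algebra_simps) 
    have "u - w0 = (u - y) + (y - w0)" by simp
    then have tri: "norm (u - w0) \<le> r + D" unfolding r_def D_def
      by (metis norm_triangle_ineq)
    have "mr - K * (r + D) \<le> mr - K * norm (u - w0)" using tri K0 by (simp add: mult_left_mono)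
    then have "ereal (mr - K * (r + D)) \<le> \<phi> u" using lb[of u] by (meson ereal_less_eq(3) order_trans)
    then have "ereal (mr - K * (r + D) + q u) \<le> h u" unfolding h_def
      by (cases "\<phi> u") auto
    moreover have "h0 < mr - K * (r + D) + q u"
      using key unfolding q_def B_def r_def by (simp add: norm_minus_commute algebra_simps)
    then have "ereal h0 < ereal (mr - K * (r + D) + q u)" by simp
    ultimately show ?thesis by (rule less_le_trans[rotated])
  qed
  obtain x where x: "x \<in> cball y R" "\<And>u. u \<in> cball y R \<Longrightarrow> h x \<le> h u"
  proof -
    have "2 * lam * (K + \<bar>B\<bar> + 1) \<ge> 0" using lam K0 by simp
    then have "R \<ge> 0" using R_def by linarith
    then have "cball y R \<noteq> {}" by auto
    then show ?thesis using lscn_attains_min[OF lsh compact_cball, of y R] that by blast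
  qed
  have w0in: "w0 \<in> cball y R"
  proof (rule ccontr)
    assume "w0 \<notin> cball y R"
    then have "norm (w0 - y) > R" by (simp add: dist_norm norm_minus_commute)
    then show False using far[of w0] hw0 by simp
  qed
  have "h x \<le> h w" for w
  proof (cases "w \<in> cball y R")
    case True then show ?thesis using x by blast
  next
    case False
    then have "norm (w - y) > R" by (simp add: dist_norm norm_minus_commute)
    then have "ereal h0 < h w" by (rule far)
    then show ?thesis using x(2)[OF w0in] hw0 by simp
  qed
  then show ?thesis unfolding h_def q_def by blast
qed

locale proxloc =
  fixes \<phi> :: "'a::euclidean_space \<Rightarrow> ereal" and lam :: real
  assumes cv: "ext_convex \<phi>" and ls: "ext_lsc \<phi>" and pr: "ext_proper \<phi>" and lam: "lam > 0"
begin

abbreviation "p \<equiv> prox lam \<phi>"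

definition hh :: "'a \<Rightarrow> 'a \<Rightarrow> ereal" where
  "hh y w = \<phi> w + ereal (norm (y - w)^2 / (2 * lam))"

lemma nm: "\<phi> u \<noteq> -\<infinity>" using pr unfolding ext_proper_def by blast

lemma min_finite:
  assumes "\<forall>w. hh y x \<le> hh y w"
  shows "\<phi> x \<noteq> \<infinity>"
proof
  assume inf: "\<phi> x = \<infinity>"
  obtain w0 where w0: "\<phi> w0 \<noteq> \<infinity>" using pr unfolding ext_proper_def by blast
  have "hh y x \<le> hh y w0" using assms by blast
  then show False using inf w0 unfolding hh_def by (cases "\<phi> w0") auto
qed

lemma min_unique:
  assumes m1: "\<forall>w. hh y x1 \<le> hh y w" and m2: "\<forall>w. hh y x2 \<le> hh y w"
  shows "x1 = x2"
proof -
  obtain a1 where a1: "\<phi> x1 = ereal a1" using min_finite[OF m1] nm[of x1] by (cases "\<phi> x1") auto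
  obtain a2 where a2: "\<phi> x2 = ereal a2" using min_finite[OF m2] nm[of x2] by (cases "\<phi> x2") auto
  define q where "q = (\<lambda>w. norm (y - w)^2 / (2 * lam))"
  define Xv where "Xv = norm (x1 - x2)^2 / (8 * lam)"
  have "hh y x1 \<le> hh y x2" "hh y x2 \<le> hh y x1" using m1 m2 by auto
  then have eq: "a1 + q x1 = a2 + q x2" using a1 a2 unfolding hh_def q_def by auto
  define mid where "mid = (1 - 1/2) *\<^sub>R x1 + (1/2::real) *\<^sub>R x2"
  have hf: "0 \<le> (1/2::real) \<and> (1/2::real) \<le> 1" by simp
  have "\<phi> mid \<le> ereal (1 - 1/2) * \<phi> x1 + ereal (1/2) * \<phi> x2"
    unfolding mid_def by (rule cv[unfolded ext_convex_def, rule_format, OF hf, of x1 x2])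
  also have "\<dots> = ereal ((a1 + a2)/2)" using a1 a2 by simp
  finally have phim: "\<phi> mid \<le> ereal ((a1 + a2)/2)" .
  have "hh y x1 \<le> hh y mid" using m1 by blast
  also have "\<dots> \<le> ereal ((a1 + a2)/2 + q mid)" unfolding hh_def q_def using phim
    by (cases "\<phi> mid") auto
  finally have "a1 + q x1 \<le> (a1 + a2)/2 + q mid" using a1 unfolding hh_def q_def by simp
  moreover have "q mid = (q x1 + q x2)/2 - Xv" unfolding Xv_def
    unfolding q_def mid_def norm_mid_identity[of y x1 x2] using lam by (simp add: field_simps)
  ultimately have "Xv \<le> 0" using eq by (simp add: field_simps)
  then have "norm (x1 - x2)^2 / (8 * lam) \<le> 0" unfolding Xv_def .
  then have "norm (x1 - x2)^2 \<le> 0" using lam by (simp add: divide_le_0_iff)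
  then show ?thesis by simp
qed

lemma prox_min: "\<forall>w. hh y (p y) \<le> hh y w"
proof -
  obtain x where x: "\<forall>w. hh y x \<le> hh y w"
    using prox_exists[OF cv ls pr lam, of y] unfolding hh_def by blast
  have ex1: "\<exists>!x. \<forall>w. hh y x \<le> hh y w" using x min_unique by blast
  have "p y = (THE x. \<forall>w. hh y x \<le> hh y w)" unfolding prox_def hh_def by simp
  then show ?thesis using theI'[OF ex1] by simp
qed

lemma prox_fin: "\<phi> (p y) = ereal (real_of_ereal (\<phi> (p y)))"
  using min_finite[OF prox_min] nm by (cases "\<phi> (p y)") auto

lemma prox_vi:
  assumes w: "\<phi> w \<noteq> \<infinity>"
  shows "real_of_ereal (\<phi> (p y)) + inner (y - p y) (w - p y) / lam \<le> real_of_ereal (\<phi> w)"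
proof -
  define x where "x = p y"
  define a where "a = real_of_ereal (\<phi> x)"
  define bw where "bw = real_of_ereal (\<phi> w)"
  have ax: "\<phi> x = ereal a" unfolding a_def x_def using prox_fin by simp
  have bww: "\<phi> w = ereal bw" unfolding bw_def using w nm[of w] by (cases "\<phi> w") auto
  define c where "c = inner (y - x) (w - x)"
  define N where "N = norm (w - x)^2"
  have tin: "a \<le> bw - c / lam + t * N / (2 * lam)" if t: "0 < t" "t \<le> 1" for t
  proof -
    define xt where "xt = (1 - t) *\<^sub>R x + t *\<^sub>R w"
    have "\<phi> xt \<le> ereal (1 - t) * \<phi> x + ereal t * \<phi> w"
      using cv t unfolding ext_convex_def xt_def by auto
    then have cvx: "\<phi> xt \<le> ereal ((1 - t) * a + t * bw)" using ax bww by simp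
    have "hh y x \<le> hh y xt" using prox_min x_def by blast
    also have "\<dots> \<le> ereal ((1 - t) * a + t * bw + norm (y - xt)^2 / (2 * lam))"
      unfolding hh_def using cvx by (cases "\<phi> xt") auto
    finally have "a + norm (y - x)^2 / (2 * lam) \<le> (1 - t) * a + t * bw + norm (y - xt)^2 / (2 * lam)"
      unfolding hh_def using ax by simp
    moreover have "norm (y - xt)^2 = norm (y - x)^2 - 2 * t * c + t^2 * N"
      unfolding xt_def c_def N_def by (rule norm_seg_identity)
    ultimately have "a + norm (y - x)^2 / (2 * lam) \<le> (1 - t) * a + t * bw + (norm (y - x)^2 - 2 * t * c + t^2 * N) / (2 * lam)"
      by simp
    moreover have "(norm (y - x)^2 - 2 * t * c + t^2 * N) / (2 * lam) = norm (y - x)^2 / (2 * lam) - t * c / lam + t * (t * N / (2 * lam))"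
      using lam by (simp add: field_simps power2_eq_square)
    ultimately have "t * a \<le> t * bw - t * c / lam + t * (t * N / (2 * lam))"
      by (simp add: algebra_simps)
    then have "t * a \<le> t * (bw - c / lam + t * N / (2 * lam))" by (simp add: algebra_simps)
    then show ?thesis using t by simp
  qed
  show ?thesis
  proof (rule ccontr)
    assume "\<not> ?thesis"
    then have gpos: "a + c / lam - bw > 0" unfolding a_def c_def bw_def x_def by simp
    define g where "g = a + c / lam - bw"
    define t where "t = min 1 (g * lam / (N + 1))"
    have N0: "N \<ge> 0" unfolding N_def by simp
    have t0: "0 < t" "t \<le> 1" unfolding t_def g_def using gpos lam N0 by auto
    have "t * N \<le> (g * lam / (N + 1)) * N" unfolding t_def using N0 by (intro mult_right_mono) auto
    also have "\<dots> < g * lam" using N0 gpos lam g_def by (simp add: field_simps)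
    finally have tN: "t * N < g * lam" .
    have "g * lam < g * (lam * 2)" using gpos lam g_def by simp
    then have "t * N / (2 * lam) < g" using tN lam by (simp add: field_simps)
    then show False using tin[OF t0] g_def by simp
  qed
qed

lemma prox_firm: "norm (p a - p b)^2 \<le> inner (a - b) (p a - p b)"
proof -
  have f1: "\<phi> (p b) \<noteq> \<infinity>" "\<phi> (p a) \<noteq> \<infinity>" by (subst prox_fin; simp)+
  have "real_of_ereal (\<phi> (p a)) + inner (a - p a) (p b - p a) / lam \<le> real_of_ereal (\<phi> (p b))"
    by (rule prox_vi[OF f1(1)])
  moreover have "real_of_ereal (\<phi> (p b)) + inner (b - p b) (p a - p b) / lam \<le> real_of_ereal (\<phi> (p a))"
    by (rule prox_vi[OF f1(2)])
  ultimately have "inner (a - p a) (p b - p a) / lam + inner (b - p b) (p a - p b) / lam \<le> 0" by simp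
  then have "inner (a - p a) (p b - p a) + inner (b - p b) (p a - p b) \<le> 0"
    using lam by (simp add: add_divide_distrib[symmetric] divide_le_0_iff)
  then have "0 \<le> inner ((a - b) - (p a - p b)) (p a - p b)"
    by (simp add: inner_diff_left inner_diff_right inner_commute algebra_simps)
  then show ?thesis by (simp add: inner_diff_left power2_norm_eq_inner)
qed

lemma prox_nonexp: "norm (p a - p b) \<le> norm (a - b)"
proof -
  have "norm (p a - p b)^2 \<le> norm (a - b) * norm (p a - p b)"
    using prox_firm[of a b] Cauchy_Schwarz_ineq2[of "a - b" "p a - p b"] by simp
  then show ?thesis
  proof (cases "norm (p a - p b) = 0")
    case True then show ?thesis by simp
  next
    case False
    then have "norm (p a - p b) > 0" by simp
    then show ?thesis using \<open>norm (p a - p b)^2 \<le> norm (a - b) * norm (p a - p b)\<close>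
      by (simp add: power2_eq_square)
  qed
qed

lemma resid_nonexp: "norm ((a - p a) - (b - p b)) \<le> norm (a - b)"
proof -
  have e: "(a - p a) - (b - p b) = (a - b) - (p a - p b)" by simp
  have "norm ((a - b) - (p a - p b))^2 = norm (a - b)^2 - 2 * inner (a - b) (p a - p b) + norm (p a - p b)^2"
    by (simp add: power2_norm_eq_inner inner_diff_left inner_diff_right inner_commute)
  also have "\<dots> \<le> norm (a - b)^2"
  proof -
    have "0 \<le> norm (p a - p b)^2" by simp
    then show ?thesis using prox_firm[of a b] by linarith
  qed
  finally show ?thesis unfolding e by (rule power2_le_imp_le) simp
qed

lemma prox_cont: "continuous_on UNIV p"
  by (rule lipschitz_on_continuous_on[where L=1]) (auto intro!: lipschitz_onI simp: dist_norm prox_nonexp)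

lemma prox_meas[measurable]: "p \<in> borel_measurable borel"
  by (rule borel_measurable_continuous_onI[OF prox_cont])

end

locale detloc = proxloc \<phi> lam for \<phi> :: "'a::euclidean_space \<Rightarrow> ereal" and lam +
  fixes f :: "'a \<Rightarrow> real" and gf :: "'a \<Rightarrow> 'a" and L psibar :: real
  assumes f_grad: "\<And>y. (f has_derivative (\<lambda>h. gf y \<bullet> h)) (at y)"
  and B1: "\<And>y y'. norm (gf y - gf y') \<le> L * norm (y - y')"
  and Lpos: "L > 0"
  and A1: "\<And>y. \<phi> y \<noteq> \<infinity> \<Longrightarrow> ereal (f y) + \<phi> y \<ge> ereal psibar"
begin

abbreviation "FF \<equiv> F_nor lam \<phi> gf"
abbreviation "xi \<equiv> xi_const L lam"
abbreviation "HH \<equiv> H_merit xi lam f gf \<phi>"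

lemma descent: "f b \<le> f a + gf a \<bullet> (b - a) + L * norm (b - a)^2"
proof -
  define d where "d = b - a"
  define g where "g = (\<lambda>t::real. f (a + t *\<^sub>R d) - t * (gf a \<bullet> d))"
  define g' where "g' = (\<lambda>t h::real. gf (a + t *\<^sub>R d) \<bullet> (h *\<^sub>R d) - h * (gf a \<bullet> d))"
  have der: "(g has_derivative g' t) (at t)" for t
  proof -
    have "((\<lambda>t. a + t *\<^sub>R d) has_derivative (\<lambda>h. h *\<^sub>R d)) (at t)"
      by (auto intro!: derivative_eq_intros)
    from has_derivative_compose[OF this f_grad]
    have "((\<lambda>t. f (a + t *\<^sub>R d)) has_derivative (\<lambda>h. gf (a + t *\<^sub>R d) \<bullet> (h *\<^sub>R d))) (at t)" .
    then show ?thesis unfolding g_def g'_def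
      by (auto intro!: derivative_eq_intros)
  qed
  have cont: "continuous_on {0..1} g"
    by (rule has_derivative_continuous_on[of _ _ g']) (meson der has_derivative_at_withinI)
  obtain t where t: "t \<in> {0<..<1}" "norm (g 1 - g 0) \<le> norm (g' t (1 - 0))"
    using mvt_general[of 0 1 g g', OF _ cont der] by auto
  have "g' t (1 - 0) = (gf (a + t *\<^sub>R d) - gf a) \<bullet> d" unfolding g'_def by (simp add: inner_diff_left)
  then have "norm (g' t (1 - 0)) \<le> norm (gf (a + t *\<^sub>R d) - gf a) * norm d"
    by (simp add: Cauchy_Schwarz_ineq2)
  also have "\<dots> \<le> (L * norm (t *\<^sub>R d)) * norm d"
    using B1[of "a + t *\<^sub>R d" a] by (intro mult_right_mono) auto
  also have "\<dots> = L * (t * (norm d * norm d))" using t(1) by (simp add: abs_of_pos algebra_simps)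
  also have "\<dots> \<le> L * (norm d * norm d)" using t(1) Lpos
    by (intro mult_left_mono) (auto intro: mult_left_le_one_le)
  finally have "g 1 - g 0 \<le> L * norm d^2" using t(2) by (simp add: power2_eq_square algebra_simps)
  then show ?thesis unfolding g_def d_def by simp
qed

lemma FF_lip: "norm (FF y1 - FF y2) \<le> (L + 1/lam) * norm (y1 - y2)"
proof -
  have e: "FF y1 - FF y2 = (gf (p y1) - gf (p y2)) + (1/lam) *\<^sub>R ((y1 - p y1) - (y2 - p y2))"
    unfolding F_nor_def by (simp add: algebra_simps)
  have "norm (FF y1 - FF y2) \<le> norm (gf (p y1) - gf (p y2)) + (1/lam) * norm ((y1 - p y1) - (y2 - p y2))"
    unfolding e using lam by (metis norm_triangle_ineq norm_scaleR abs_of_pos divide_pos_pos zero_less_one)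
  also have "\<dots> \<le> L * norm (y1 - y2) + (1/lam) * norm (y1 - y2)"
  proof -
    have "norm (gf (p y1) - gf (p y2)) \<le> L * norm (y1 - y2)"
      using B1[of "p y1" "p y2"] prox_nonexp[of y1 y2] Lpos by (meson mult_left_mono order_trans less_imp_le)
    moreover have "(1/lam) * norm ((y1 - p y1) - (y2 - p y2)) \<le> (1/lam) * norm (y1 - y2)"
      using resid_nonexp[of y1 y2] lam by (intro mult_left_mono) auto
    ultimately show ?thesis by linarith
  qed
  finally show ?thesis by (simp add: algebra_simps)
qed

lemma Fnat_bound: "norm (F_nat lam \<phi> gf (p z)) \<le> lam * norm (FF z)"
proof -
  have e: "p z - lam *\<^sub>R gf (p z) = z - lam *\<^sub>R FF z"
    unfolding F_nor_def using lam by (simp add: algebra_simps)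
  have "norm (F_nat lam \<phi> gf (p z)) = norm (p z - p (z - lam *\<^sub>R FF z))"
    unfolding F_nat_def e ..
  also have "\<dots> \<le> norm (z - (z - lam *\<^sub>R FF z))" by (rule prox_nonexp)
  also have "\<dots> = lam * norm (FF z)" using lam by simp
  finally show ?thesis .
qed

lemma den_pos: "0 < 2 + 2 * L^2 * lam^2" by (simp add: add_pos_nonneg)
lemma xi_pos: "xi > 0" unfolding xi_const_def using den_pos by simp
lemma xi_le: "xi \<le> 1/2" unfolding xi_const_def using den_pos by (simp add: field_simps)
lemma xi_eq: "xi * (1 + lam^2 * L^2) = 1/2" unfolding xi_const_def using den_pos by (simp add: field_simps)

lemma HH_lower: "HH y \<ge> psibar"
proof -
  have fin: "\<phi> (p y) \<noteq> \<infinity>" by (subst prox_fin) simp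
  have "ereal psibar \<le> ereal (f (p y)) + \<phi> (p y)" using A1[OF fin] .
  also have "\<dots> = ereal (f (p y) + real_of_ereal (\<phi> (p y)))" by (subst prox_fin) simp
  finally have "psibar \<le> f (p y) + real_of_ereal (\<phi> (p y))" by simp
  moreover have "0 \<le> xi * lam / 2 * (norm (FF y))^2" using xi_pos lam by simp
  ultimately show ?thesis unfolding H_merit_def by linarith
qed

end

lemma young1: fixes a b e :: real assumes "e > 0" shows "a * b \<le> a^2 / (4 * e) + e * b^2"
proof -
  have "0 \<le> (a - 2 * e * b)^2" by simp
  then have "4 * e * (a * b) \<le> a^2 + 4 * e^2 * b^2" by (simp add: power2_eq_square algebra_simps)
  then show ?thesis using assms by (simp add: field_simps power2_eq_square)
qed

lemma scalar_core:
 fixes \<alpha> lam L \<xi> A D E dH iFd iud iFg iFu iFe ied W2 U2 :: real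
 assumes pos: "\<alpha> > 0" "lam > 0" "L > 0" "\<xi> > 0" "\<xi> \<le> 1/2" and xe: "\<xi> * (1 + lam^2 * L^2) = 1/2"
   and nn: "A \<ge> 0" "D \<ge> 0" "E \<ge> 0"
   and a1: "\<alpha> \<le> 1 / (8 * (L + 1/lam))" and a2: "\<alpha> \<le> lam / 12"
   and dH: "dH \<le> (1 - \<xi>) * iFd + iud / lam - D^2 / lam + L * D^2 + \<xi> * lam * iFg + \<xi> * iFu + \<xi> * lam / 2 * W2"
   and fu: "iFu = - \<alpha> * A^2 - \<alpha> * iFe"
   and ud: "\<alpha> * iFd = - iud - \<alpha> * ied"
   and udD: "iud \<ge> D^2"
   and fg: "iFg \<le> L * A * D" and fe: "- iFe \<le> A * E" and ed: "- ied \<le> E * D"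
   and W: "W2 \<le> 3 * (L^2 * D^2) + 3 * (U2 / lam^2) + 3 * (D^2 / lam^2)"
   and U: "U2 \<le> 2 * \<alpha>^2 * A^2 + 2 * \<alpha>^2 * E^2"
 shows "dH \<le> - (\<xi> / 4) * \<alpha> * A^2 + 2 * \<alpha> * E^2"
proof -
  define tD1 where "tD1 = (1 - \<xi>) / \<alpha> * D^2"
  define tD2 where "tD2 = D^2 / (4 * \<alpha>)"
  define tD3 where "tD3 = \<xi> * lam^2 * L^2 / \<alpha> * D^2"
  define tD4 where "tD4 = L * D^2"
  define tD5 where "tD5 = 3/2 * \<xi> * lam * L^2 * D^2"
  define tD6 where "tD6 = 3/2 * \<xi> / lam * D^2"
  define tA1 where "tA1 = \<xi> * \<alpha> * A^2"
  define tA2 where "tA2 = 3 * \<xi> * \<alpha>^2 / lam * A^2"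
  define tE1 where "tE1 = \<alpha> * E^2"
  define tE2 where "tE2 = \<xi> * \<alpha> * E^2"
  define tE3 where "tE3 = 3 * \<xi> * \<alpha>^2 / lam * E^2"
  define c where "c = (1 - \<xi>) / \<alpha> - 1 / lam"
  have xi1: "0 \<le> 1 - \<xi>" using pos by simp
  have iFd_eq: "iFd = - iud / \<alpha> - ied" using ud pos by (simp add: field_simps)
  have c0: "c \<ge> 0"
  proof -
    have "lam / 2 \<le> (1 - \<xi>) * lam" using pos by (simp add: field_simps)
    then have "\<alpha> \<le> (1 - \<xi>) * lam" using a2 pos by linarith
    then have "1 / lam \<le> (1 - \<xi>) / \<alpha>" using pos by (simp add: field_simps)
    then show ?thesis unfolding c_def by simp
  qed
  have e1: "(1 - \<xi>) * iFd + iud / lam - D^2 / lam = - (c * iud) - (1 - \<xi>) * ied - D^2 / lam"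
    unfolding c_def iFd_eq using pos by (simp add: field_simps)
  have m1: "c * D^2 \<le> c * iud" by (rule mult_left_mono[OF udD c0])
  have m2: "- ((1 - \<xi>) * ied) \<le> (1 - \<xi>) * (E * D)"
    using mult_left_mono[OF ed xi1] by simp
  have m3: "c * D^2 + D^2 / lam = tD1" unfolding c_def tD1_def using pos by (simp add: field_simps)
  have G1: "(1 - \<xi>) * iFd + iud / lam - D^2 / lam \<le> - tD1 + (1 - \<xi>) * (E * D)"
    using e1 m1 m2 m3 by linarith
  have "(1 - \<xi>) * (E * D) \<le> 1 * (E * D)" using pos nn by (intro mult_right_mono) auto
  moreover have "D * E \<le> D^2 / (4 * \<alpha>) + \<alpha> * E^2" by (rule young1[OF pos(1)])
  ultimately have G2: "(1 - \<xi>) * (E * D) \<le> tD2 + tE1" unfolding tD2_def tE1_def by (simp add: mult.commute)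
  have y3: "A * (lam * L * D) \<le> A^2 / (4 * (1/\<alpha>)) + (1/\<alpha>) * (lam * L * D)^2"
    using young1[of "1/\<alpha>" A "lam * L * D"] pos by simp
  have "\<xi> * lam * iFg \<le> \<xi> * lam * (L * A * D)" using fg pos by (intro mult_left_mono) auto
  also have "\<dots> = \<xi> * (A * (lam * L * D))" by (simp add: algebra_simps)
  also have "\<dots> \<le> \<xi> * (A^2 / (4 * (1/\<alpha>)) + (1/\<alpha>) * (lam * L * D)^2)"
    using y3 pos by (intro mult_left_mono) auto
  also have "\<dots> = tA1 / 4 + tD3" unfolding tA1_def tD3_def using pos
    by (simp add: field_simps power2_eq_square)
  finally have G3: "\<xi> * lam * iFg \<le> tA1 / 4 + tD3" .
  have "A * E \<le> A^2 / (4 * 1) + 1 * E^2" using young1[of 1 A E] by simp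
  then have "- iFe \<le> A^2 / 4 + E^2" using fe by simp
  then have "\<xi> * \<alpha> * (- iFe) \<le> \<xi> * \<alpha> * (A^2 / 4 + E^2)" using pos by (intro mult_left_mono) auto
  then have G4: "\<xi> * iFu \<le> - tA1 + tA1 / 4 + tE2" unfolding fu tA1_def tE2_def
    by (simp add: algebra_simps)
  have "\<xi> * lam / 2 * W2 \<le> \<xi> * lam / 2 * (3 * (L^2 * D^2) + 3 * (U2 / lam^2) + 3 * (D^2 / lam^2))"
    using W pos by (intro mult_left_mono) auto
  also have "\<dots> = tD5 + tD6 + 3/2 * \<xi> / lam * U2" unfolding tD5_def tD6_def using pos
    by (simp add: field_simps power2_eq_square)
  finally have g5a: "\<xi> * lam / 2 * W2 \<le> tD5 + tD6 + 3/2 * \<xi> / lam * U2" .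
  have "3/2 * \<xi> / lam * U2 \<le> 3/2 * \<xi> / lam * (2 * \<alpha>^2 * A^2 + 2 * \<alpha>^2 * E^2)"
    using U pos by (intro mult_left_mono) auto
  also have "\<dots> = tA2 + tE3" unfolding tA2_def tE3_def using pos by (simp add: field_simps)
  finally have G5: "\<xi> * lam / 2 * W2 \<le> tD5 + tD6 + tA2 + tE3" using g5a by linarith
  have xl: "\<xi> * lam^2 * L^2 = 1/2 - \<xi>" using xe by (simp add: algebra_simps)
  have t3: "tD3 = (1/2 - \<xi>) / \<alpha> * D^2" unfolding tD3_def xl ..
  have s1: "- tD1 + tD2 + tD3 = - tD2" unfolding tD1_def tD2_def t3 using pos
    by (simp add: field_simps)
  have "0 \<le> (lam * L - 1)^2" by simp
  then have "2 * (lam * L) \<le> 1 + lam^2 * L^2" by (simp add: power2_eq_square algebra_simps)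
  then have "\<xi> * (2 * (lam * L)) \<le> \<xi> * (1 + lam^2 * L^2)" using pos by (intro mult_left_mono) auto
  then have "4 * (\<xi> * lam * L) \<le> 1" using xe by simp
  then have "4 * (\<xi> * lam * L) * L \<le> 1 * L" using pos by (intro mult_right_mono) auto
  then have k1: "\<xi> * lam * L^2 \<le> L / 4" by (simp add: power2_eq_square algebra_simps)
  have k2: "\<xi> / lam \<le> 1/2 * (1 / lam)" using pos by (simp add: field_simps)
  have "8 * (L + 1/lam) * \<alpha> \<le> 1" using a1 pos by (simp add: field_simps add_pos_pos)
  then have k3: "2 * L + 2 * (1/lam) \<le> 1 / (4 * \<alpha>)" using pos by (simp add: field_simps)
  have kk: "L + 3/2 * (\<xi> * lam * L^2) + 3/2 * (\<xi> / lam) \<le> 1 / (4 * \<alpha>)"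
  proof -
    have "0 < 1 / lam" using pos by simp
    then show ?thesis using k1 k2 k3 pos by linarith
  qed
  have "(L + 3/2 * (\<xi> * lam * L^2) + 3/2 * (\<xi> / lam)) * D^2 \<le> (1 / (4 * \<alpha>)) * D^2"
    using kk by (intro mult_right_mono) auto
  then have s2: "tD4 + tD5 + tD6 \<le> tD2" unfolding tD4_def tD5_def tD6_def tD2_def
    by (simp add: algebra_simps)
  have "3 * \<alpha> / lam \<le> 1/4" using a2 pos by (simp add: field_simps)
  then have "(3 * \<alpha> / lam) * tA1 \<le> (1/4) * tA1" unfolding tA1_def using pos
    by (intro mult_right_mono) auto
  then have G7: "tA2 \<le> tA1 / 4" unfolding tA1_def tA2_def by (simp add: power2_eq_square field_simps)
  have "\<xi> * (\<alpha> * E^2) \<le> 1/2 * (\<alpha> * E^2)" using pos by (intro mult_right_mono) auto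
  then have g8a: "tE2 \<le> tE1 / 2" unfolding tE2_def tE1_def by simp
  have "3 * \<xi> * \<alpha> / lam \<le> 1/8"
  proof -
    have "3 * \<alpha> / lam \<le> 1/4" using a2 pos by (simp add: field_simps)
    then have "\<xi> * (3 * \<alpha> / lam) \<le> 1/2 * (1/4)" using pos
      by (intro mult_mono) auto
    then show ?thesis by simp
  qed
  then have "(3 * \<xi> * \<alpha> / lam) * tE1 \<le> 1/8 * tE1" unfolding tE1_def using pos
    by (intro mult_right_mono) auto
  then have g8b: "tE3 \<le> tE1 / 8" unfolding tE3_def tE1_def by (simp add: power2_eq_square field_simps)
  have fin: "- (\<xi> / 4) * \<alpha> * A^2 = - (tA1 / 4)" unfolding tA1_def by simp
  have fin2: "2 * \<alpha> * E^2 = 2 * tE1" unfolding tE1_def by simp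
  have "L * D^2 = tD4" unfolding tD4_def ..
  moreover have "tE1 \<ge> 0" unfolding tE1_def using pos by simp
  ultimately show ?thesis unfolding fin fin2
    using dH G1 G2 G3 G4 G5 s1 s2 G7 g8a g8b by linarith
qed

lemma sq3: fixes a b c :: real shows "(a + b + c)^2 \<le> 3 * a^2 + 3 * b^2 + 3 * c^2"
proof -
  have "0 \<le> (a - b)^2 + (b - c)^2 + (a - c)^2" by simp
  then show ?thesis by (simp add: power2_eq_square algebra_simps)
qed

lemma sq2: fixes a b :: real shows "(a + b)^2 \<le> 2 * a^2 + 2 * b^2"
proof -
  have "0 \<le> (a - b)^2" by simp
  then show ?thesis by (simp add: power2_eq_square algebra_simps)
qed

lemma norm3: fixes a b c :: "'a::real_normed_vector"
  shows "norm (a + b + c)^2 \<le> 3 * norm a^2 + 3 * norm b^2 + 3 * norm c^2"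
proof -
  have "norm (a + b + c) \<le> norm a + norm b + norm c" by (meson norm_triangle_le norm_triangle_ineq add_mono order_refl)
  then have "norm (a + b + c)^2 \<le> (norm a + norm b + norm c)^2" by (simp add: power_mono)
  then show ?thesis using sq3[of "norm a" "norm b" "norm c"] by linarith
qed

lemma norm2: fixes a b :: "'a::real_normed_vector"
  shows "norm (a + b)^2 \<le> 2 * norm a^2 + 2 * norm b^2"
proof -
  have "norm (a + b)^2 \<le> (norm a + norm b)^2" by (simp add: power_mono norm_triangle_ineq)
  then show ?thesis using sq2[of "norm a" "norm b"] by linarith
qed

context detloc
begin

lemma one_step:
  assumes al: "\<alpha> > 0" "\<alpha> \<le> 1 / (8 * (L + 1/lam))" "\<alpha> \<le> lam / 12"
    and y': "y' = y - \<alpha> *\<^sub>R (FF y + \<delta>)"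
  shows "HH y' \<le> HH y - (xi / 4) * \<alpha> * norm (FF y)^2 + 2 * \<alpha> * norm \<delta>^2"
proof -
  define x where "x = p y"
  define x' where "x' = p y'"
  define d where "d = x' - x"
  define u where "u = y' - y"
  define Fy where "Fy = FF y"
  define Fy' where "Fy' = FF y'"
  define dg where "dg = gf x' - gf x"
  define W where "W = dg + (1/lam) *\<^sub>R (u - d)"
  have Fy_def': "Fy = gf x + (1/lam) *\<^sub>R (y - x)" unfolding Fy_def x_def F_nor_def ..
  have FyW: "Fy' = Fy + W"
    unfolding Fy'_def Fy_def' W_def dg_def u_def d_def x'_def F_nor_def x_def
    by (simp add: algebra_simps)
  have u_eq: "u = - \<alpha> *\<^sub>R (Fy + \<delta>)" unfolding u_def y' Fy_def by simp
  define ax where "ax = real_of_ereal (\<phi> x)"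
  define ax' where "ax' = real_of_ereal (\<phi> x')"
  have finx: "\<phi> x \<noteq> \<infinity>" unfolding x_def by (subst prox_fin) simp
  have vi: "ax' + inner (y' - x') (x - x') / lam \<le> ax"
    unfolding ax_def ax'_def x'_def using prox_vi[OF finx, of y'] by simp
  have desc: "f x' \<le> f x + gf x \<bullet> d + L * norm d^2" unfolding d_def by (rule descent)
  have firm: "norm d^2 \<le> inner u d" unfolding d_def u_def x'_def x_def by (rule prox_firm)
  have dgn: "norm dg \<le> L * norm d" unfolding dg_def d_def using B1 .
  have "inner (y' - x') (x - x') = - inner ((y - x) + (u - d)) d"
    unfolding u_def d_def by (simp add: algebra_simps inner_minus_right)
  also have "\<dots> = - inner (y - x) d - inner u d + norm d^2"
    by (simp add: inner_add_left inner_diff_left power2_norm_eq_inner)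
  finally have vi2: "ax' - ax \<le> inner (y - x) d / lam + inner u d / lam - norm d^2 / lam"
    using vi by (simp add: diff_divide_distrib add_divide_distrib)
  have iFd: "inner Fy d = gf x \<bullet> d + inner (y - x) d / lam"
    unfolding Fy_def' by (simp add: inner_add_left)
  have psi: "(f x' + ax') - (f x + ax) \<le> inner Fy d + inner u d / lam - norm d^2 / lam + L * norm d^2"
    using vi2 desc iFd by linarith
  have Fsq: "norm Fy'^2 = norm Fy^2 + 2 * inner Fy W + norm W^2"
    unfolding FyW by (simp add: power2_norm_eq_inner inner_add_left inner_add_right inner_commute)
  have iFW: "inner Fy W = inner Fy dg + inner Fy u / lam - inner Fy d / lam"
    unfolding W_def by (simp add: inner_add_right inner_diff_right diff_divide_distrib)
  have Fpart: "xi * lam / 2 * norm Fy'^2 - xi * lam / 2 * norm Fy^2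
      = xi * lam * inner Fy dg + xi * inner Fy u - xi * inner Fy d + xi * lam / 2 * norm W^2"
    unfolding Fsq iFW using lam by (simp add: field_simps)
  have HHd: "HH y' - HH y = ((f x' + ax') - (f x + ax)) + (xi * lam / 2 * norm Fy'^2 - xi * lam / 2 * norm Fy^2)"
    unfolding H_merit_def ax_def ax'_def x_def x'_def Fy_def Fy'_def by simp
  have dH: "HH y' - HH y \<le> (1 - xi) * inner Fy d + inner u d / lam - norm d^2 / lam + L * norm d^2
      + xi * lam * inner Fy dg + xi * inner Fy u + xi * lam / 2 * norm W^2"
    using HHd psi Fpart by (simp add: algebra_simps)
  have fu: "inner Fy u = - \<alpha> * norm Fy^2 - \<alpha> * inner Fy \<delta>"
    unfolding u_eq by (simp add: inner_add_right power2_norm_eq_inner algebra_simps)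
  have ud: "\<alpha> * inner Fy d = - inner u d - \<alpha> * inner \<delta> d"
    unfolding u_eq by (simp add: inner_add_left algebra_simps)
  have fg: "inner Fy dg \<le> L * norm Fy * norm d"
  proof -
    have "inner Fy dg \<le> norm Fy * norm dg" by (rule Cauchy_Schwarz_ineq2[THEN abs_le_D1])
    also have "\<dots> \<le> norm Fy * (L * norm d)" using dgn by (intro mult_left_mono) auto
    finally show ?thesis by (simp add: algebra_simps)
  qed
  have fe: "- inner Fy \<delta> \<le> norm Fy * norm \<delta>"
    using Cauchy_Schwarz_ineq2[of Fy \<delta>] by linarith
  have ed: "- inner \<delta> d \<le> norm \<delta> * norm d"
    using Cauchy_Schwarz_ineq2[of \<delta> d] by linarith
  have Wb: "norm W^2 \<le> 3 * (L^2 * norm d^2) + 3 * (norm u^2 / lam^2) + 3 * (norm d^2 / lam^2)"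
  proof -
    have "W = dg + (1/lam) *\<^sub>R u + (- (1/lam) *\<^sub>R d)" unfolding W_def by (simp add: algebra_simps)
    then have "norm W^2 \<le> 3 * norm dg^2 + 3 * norm ((1/lam) *\<^sub>R u)^2 + 3 * norm (- (1/lam) *\<^sub>R d)^2"
      using norm3 by metis
    moreover have "norm dg^2 \<le> (L * norm d)^2" using dgn by (simp add: power_mono)
    moreover have "norm ((1/lam) *\<^sub>R u)^2 = norm u^2 / lam^2" using lam by (simp add: power_divide)
    moreover have "norm (- (1/lam) *\<^sub>R d)^2 = norm d^2 / lam^2" using lam by (simp add: power_divide)
    ultimately show ?thesis by (simp add: power_mult_distrib)
  qed
  have Ub: "norm u^2 \<le> 2 * \<alpha>^2 * norm Fy^2 + 2 * \<alpha>^2 * norm \<delta>^2"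
  proof -
    have "norm u^2 = \<alpha>^2 * norm (Fy + \<delta>)^2" unfolding u_eq using al by (simp add: power_mult_distrib)
    also have "\<dots> \<le> \<alpha>^2 * (2 * norm Fy^2 + 2 * norm \<delta>^2)" by (intro mult_left_mono norm2) auto
    finally show ?thesis by (simp add: algebra_simps)
  qed
  have "HH y' - HH y \<le> - (xi / 4) * \<alpha> * norm Fy^2 + 2 * \<alpha> * norm \<delta>^2"
    by (rule scalar_core[OF al(1) lam Lpos xi_pos xi_le xi_eq norm_ge_zero norm_ge_zero norm_ge_zero
          al(2) al(3) dH fu ud firm fg fe ed Wb Ub])
  then show ?thesis unfolding Fy_def by simp
qed

end

lemma lambar_ge: assumes "L > 0" "lam > 0" shows "lambar_const L lam \<ge> L + 2/lam"
proof -
  have "exp (L * lam + 2) \<ge> 1" using assms by simp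
  moreover have "L + 2/lam > 0" using assms by (simp add: add_pos_pos)
  ultimately have "(L + 2/lam) * 1 \<le> (L + 2/lam) * exp (L * lam + 2)" by (intro mult_left_mono) auto
  then show ?thesis unfolding lambar_const_def by simp
qed

definition Tset :: "real \<Rightarrow> real \<Rightarrow> real set" where
  "Tset L lam = {t. 0 < t \<and> t \<le> min (4 * lam / 5) 1
             \<and> 1 / (2 * t) \<ge> xi_const L lam * (4 * L - 1 / lam) + L
             \<and> L * (lambar_const L lam)^2 * t^2 + 5 * (lambar_const L lam)^2 * t \<le> 8 * xi_const L lam / (25 * lam)
             \<and> (5 / t + L) * (1 + lambar_const L lam * t)^2 \<le> 10 / t}"

lemma T_eq: "T_const L lam = Sup (Tset L lam)" unfolding T_const_def Tset_def Let_def ..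

lemma xi_props: assumes "L > 0" "lam > 0" shows "0 < xi_const L lam" "xi_const L lam \<le> 1/2"
proof -
  have d: "0 < 2 + 2 * L^2 * lam^2" by (simp add: add_pos_nonneg)
  show "0 < xi_const L lam" unfolding xi_const_def using d by simp
  show "xi_const L lam \<le> 1/2" unfolding xi_const_def using d by (simp add: field_simps)
qed

lemma Tset_ne: assumes L: "L > 0" and lam: "lam > 0" shows "Tset L lam \<noteq> {}"
proof -
  define lb where "lb = lambar_const L lam"
  define xi where "xi = xi_const L lam"
  have lb: "lb \<ge> L + 2/lam" unfolding lb_def by (rule lambar_ge[OF L lam])
  have "L + 2/lam > 0" using L lam by (simp add: add_pos_pos)
  then have lbp: "lb > 0" using lb by linarith
  have xi: "0 < xi" "xi \<le> 1/2" unfolding xi_def using xi_props[OF L lam] by auto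
  define t where "t = min (min (4 * lam / 5) 1) (min (1 / (6 * L)) (min (8 * xi / (25 * lam * (L + 5) * lb^2)) (1 / (5 * lb))))"
  have "8 * xi / (25 * lam * (L + 5) * lb^2) > 0" using L lam lbp xi by simp
  then have tpos: "t > 0" unfolding t_def using L lam lbp by simp
  have t1: "t \<le> min (4 * lam / 5) 1" unfolding t_def by (rule min.cobounded1)
  have t2: "t \<le> 1 / (6 * L)" unfolding t_def by (rule order_trans[OF min.cobounded2 min.cobounded1])
  have t3: "t \<le> 8 * xi / (25 * lam * (L + 5) * lb^2)" unfolding t_def
    by (rule order_trans[OF min.cobounded2 order_trans[OF min.cobounded2 min.cobounded1]])
  have t4: "t \<le> 1 / (5 * lb)" unfolding t_def
    by (rule order_trans[OF min.cobounded2 order_trans[OF min.cobounded2 min.cobounded2]])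
  have c2: "1 / (2 * t) \<ge> xi * (4 * L - 1 / lam) + L"
  proof -
    have "6 * L * t \<le> 1" using t2 L by (simp add: field_simps)
    then have "3 * L \<le> 1 / (2 * t)" using tpos by (simp add: field_simps)
    moreover have "xi * (4 * L - 1 / lam) \<le> xi * (4 * L)" using xi lam by (intro mult_left_mono) auto
    moreover have "xi * (4 * L) \<le> 1/2 * (4 * L)" using xi L by (intro mult_right_mono) auto
    ultimately show ?thesis by linarith
  qed
  have c3: "L * lb^2 * t^2 + 5 * lb^2 * t \<le> 8 * xi / (25 * lam)"
  proof -
    have "t^2 \<le> t" using tpos t1 by (simp add: power2_eq_square mult_left_le_one_le)
    then have "L * lb^2 * t^2 \<le> L * lb^2 * t" using L by (intro mult_left_mono) auto
    then have "L * lb^2 * t^2 + 5 * lb^2 * t \<le> (L + 5) * lb^2 * t" by (simp add: algebra_simps)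
    also have "\<dots> \<le> (L + 5) * lb^2 * (8 * xi / (25 * lam * (L + 5) * lb^2))"
      using t3 L lbp by (intro mult_left_mono) auto
    also have "\<dots> = 8 * xi / (25 * lam)"
    proof -
      define C where "C = (L + 5) * lb^2"
      have C: "C > 0" unfolding C_def using L lbp by simp
      have "25 * lam * (L + 5) * lb^2 = 25 * lam * C" unfolding C_def by simp
      then have "(L + 5) * lb^2 * (8 * xi / (25 * lam * (L + 5) * lb^2)) = C * (8 * xi / (25 * lam * C))"
        unfolding C_def by simp
      also have "\<dots> = 8 * xi / (25 * lam)" using C lam by (simp add: field_simps)
      finally show ?thesis .
    qed
    finally show ?thesis .
  qed
  have c4: "(5 / t + L) * (1 + lb * t)^2 \<le> 10 / t"
  proof -
    have Lt: "L * t \<le> 1/6" using t2 L by (simp add: field_simps)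
    have lbt: "lb * t \<le> 1/5" using t4 lbp by (simp add: field_simps)
    have "(1 + lb * t)^2 \<le> (1 + 1/5)^2" using lbt lbp tpos by (intro power_mono) auto
    moreover have "5 + L * t \<le> 5 + 1/6" using Lt by simp
    ultimately have "(5 + L * t) * (1 + lb * t)^2 \<le> (5 + 1/6) * (1 + 1/5)^2"
      using L tpos by (intro mult_mono) auto
    also have "\<dots> \<le> 10" by (simp add: power2_eq_square)
    finally have "(5 + L * t) * (1 + lb * t)^2 \<le> 10" .
    then have "(5 + L * t) * (1 + lb * t)^2 / t \<le> 10 / t" using tpos by (simp add: divide_right_mono)
    moreover have "(5 / t + L) * (1 + lb * t)^2 = (5 + L * t) * (1 + lb * t)^2 / t"
    proof -
      have "(5 / t + L) = (5 + L * t) / t" using tpos by (simp add: field_simps)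
      then show ?thesis by simp
    qed
    ultimately show ?thesis by simp
  qed
  have "t \<in> Tset L lam" unfolding Tset_def using tpos t1 c2 c3 c4 unfolding lb_def xi_def by auto
  then show ?thesis by blast
qed

lemma T_props:
  assumes L: "L > 0" and lam: "lam > 0"
  shows "0 < T_const L lam" "T_const L lam \<le> 4 * lam / 5"
    and "\<And>a. a < T_const L lam \<Longrightarrow> \<exists>t. a < t \<and> 5 * (lambar_const L lam)^2 * t \<le> 8 * xi_const L lam / (25 * lam)"
proof -
  have ne: "Tset L lam \<noteq> {}" by (rule Tset_ne[OF L lam])
  have bdd: "bdd_above (Tset L lam)" unfolding Tset_def by (rule bdd_aboveI[of _ 1]) auto
  obtain t0 where t0: "t0 \<in> Tset L lam" using ne by blast
  have "t0 \<le> Sup (Tset L lam)" by (rule cSup_upper[OF t0 bdd])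
  moreover have "t0 > 0" using t0 unfolding Tset_def by auto
  ultimately show "0 < T_const L lam" unfolding T_eq by simp
  show "T_const L lam \<le> 4 * lam / 5" unfolding T_eq
    by (rule cSup_least[OF ne]) (auto simp: Tset_def)
  fix a assume "a < T_const L lam"
  then obtain t where t: "t \<in> Tset L lam" "a < t" unfolding T_eq using less_cSup_iff[OF ne bdd] by blast
  have "0 \<le> L * (lambar_const L lam)^2 * t^2" using L by simp
  then have "5 * (lambar_const L lam)^2 * t \<le> 8 * xi_const L lam / (25 * lam)"
    using t(1) unfolding Tset_def by auto
  then show "\<exists>t. a < t \<and> 5 * (lambar_const L lam)^2 * t \<le> 8 * xi_const L lam / (25 * lam)"
    using t(2) by blast
qed

lemma step_conds:
  assumes L: "L > 0" and lam: "lam > 0" and a0: "a > 0" and aT: "a \<le> T_const L lam / 5"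
  shows "a \<le> 1 / (8 * (L + 1/lam))" "a \<le> lam / 12" "(L + 1/lam) * a \<le> 1"
proof -
  define lb where "lb = lambar_const L lam"
  have lb: "lb \<ge> L + 2/lam" unfolding lb_def by (rule lambar_ge[OF L lam])
  have "L + 2/lam > 0" using L lam by (simp add: add_pos_pos)
  then have lbp: "lb > 0" using lb by linarith
  have "a < T_const L lam" using aT T_props(1)[OF L lam] by simp
  then obtain t where t: "a < t" "5 * lb^2 * t \<le> 8 * xi_const L lam / (25 * lam)"
    using T_props(3)[OF L lam] unfolding lb_def by blast
  have "8 * xi_const L lam / (25 * lam) \<le> 8 * (1/2) / (25 * lam)"
    using xi_props[OF L lam] lam by (intro divide_right_mono mult_left_mono) auto
  moreover have "5 * lb^2 * a \<le> 5 * lb^2 * t" using t(1) lbp by (intro mult_left_mono) auto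
  ultimately have "5 * lb^2 * a \<le> 4 / (25 * lam)" using t(2) by simp
  then have star: "a * lam * lb^2 \<le> 4 / 125" using lam by (simp add: field_simps)
  have llb: "lam * lb \<ge> 2"
  proof -
    have "lam * lb \<ge> lam * (L + 2/lam)" using lb lam by (intro mult_left_mono) auto
    also have "lam * (L + 2/lam) = lam * L + 2" using lam by (simp add: field_simps)
    moreover have "lam * L > 0" using lam L by simp
    ultimately show ?thesis by linarith
  qed
  have alb: "a * lb \<le> 2 / 125"
  proof -
    have "(a * lb) * 2 \<le> (a * lb) * (lam * lb)" using llb a0 lbp by (intro mult_left_mono) auto
    also have "\<dots> = a * lam * lb^2" by (simp add: power2_eq_square algebra_simps)
    finally show ?thesis using star by simp
  qed
  have "1/lam \<le> 2/lam" using lam by (simp add: divide_right_mono)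
  then have G: "L + 1/lam \<le> lb" using lb by linarith
  have Ga: "(L + 1/lam) * a \<le> 2 / 125"
  proof -
    have "(L + 1/lam) * a \<le> lb * a" using G a0 by (intro mult_right_mono) auto
    moreover have "lb * a = a * lb" by simp
    ultimately show ?thesis using alb by linarith
  qed
  show "(L + 1/lam) * a \<le> 1" using Ga by linarith
  have Gp: "L + 1/lam > 0" using L lam by (simp add: add_pos_pos)
  have "8 * ((L + 1/lam) * a) \<le> 1" using Ga by linarith
  then have "8 * (L + 1/lam) * a \<le> 1" by (simp only: mult.assoc)
  then show "a \<le> 1 / (8 * (L + 1/lam))" using Gp by (simp add: field_simps)
  have "1 / lb \<le> lam / 2" using llb lbp lam by (simp add: field_simps)
  have "a = (a * lb) * (1 / lb)" using lbp by simp
  also have "\<dots> \<le> (2/125) * (lam / 2)"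
    using alb \<open>1 / lb \<le> lam / 2\<close> lbp a0 by (intro mult_mono) auto
  finally show "a \<le> lam / 12" using lam by simp
qed

primrec Sq :: "real \<Rightarrow> (nat \<Rightarrow> real) \<Rightarrow> (nat \<Rightarrow> 'w \<Rightarrow> 'a::real_vector) \<Rightarrow> nat \<Rightarrow> 'w \<Rightarrow> 'a" where
  "Sq G a e 0 = (\<lambda>\<omega>. 0)"
| "Sq G a e (Suc n) = (\<lambda>\<omega>. (1 - G * a n) *\<^sub>R Sq G a e n \<omega> + a n *\<^sub>R e n \<omega>)"

lemma gen_sum1: fixes al a b :: "nat \<Rightarrow> real" and l g :: real
  shows "(\<Sum>i<k. al i * (l * (2 * a i + 2 * g * b i))) = 2 * l * (\<Sum>i<k. al i * a i) + 2 * l * g * (\<Sum>i<k. al i * b i)"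
  by (simp add: sum_distrib_left sum.distrib algebra_simps)

lemma gen_sum2: fixes al b :: "nat \<Rightarrow> real" and g :: real
  shows "(\<Sum>i<k. al i * (g * b i)) = g * (\<Sum>i<k. al i * b i)"
  by (simp add: sum_distrib_left algebra_simps)

lemma gen_div: fixes c s p q :: real assumes "c > 0" "c * s \<le> p + q" shows "s \<le> p / c + q / c"
proof -
  have "s = (c * s) / c" using assms by simp
  also have "\<dots> \<le> (p + q) / c" using assms by (intro divide_right_mono) auto
  finally show ?thesis by (simp add: add_divide_distrib)
qed

lemma gen_fin: fixes c l g h s :: real
  assumes c: "c > 0" "2 \<le> 1 / c" and nn: "l \<ge> 0" "g \<ge> 0" "s \<ge> 0"
  shows "2 * l * (4 * h / c + 32 * g * s / c) + 2 * l * g * s \<le> 8 * l / c * h + 65 * l * g / c * s"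
proof -
  have lgs: "l * g * s \<ge> 0" using nn by simp
  have "2 * (l * g * s) \<le> (1 / c) * (l * g * s)" using c lgs by (intro mult_right_mono) auto
  then have a: "2 * l * g * s \<le> l * g * s / c" by simp
  have b: "2 * l * (4 * h / c + 32 * g * s / c) = 8 * l / c * h + 64 * (l * g * s / c)"
    using c by (simp add: field_simps)
  have d: "65 * l * g / c * s = 64 * (l * g * s / c) + l * g * s / c"
    using c by (simp add: field_simps)
  show ?thesis using a b d by linarith
qed

locale mainloc = detloc \<phi> lam f gf L psibar for \<phi> :: "'a::euclidean_space \<Rightarrow> ereal" and lam f gf L psibar +
  fixes M :: "'w measure" and Fs :: "nat \<Rightarrow> 'w measure" and alpha sigma :: "nat \<Rightarrow> real"
    and z0 :: 'a and z x g :: "nat \<Rightarrow> 'w \<Rightarrow> 'a"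
  assumes prob: "prob_space M"
    and filt_sub: "\<And>n. subalgebra M (Fs n)"
    and filt_mono: "\<And>n. sets (Fs n) \<subseteq> sets (Fs (Suc n))"
    and gf_cont: "continuous_on UNIV gf"
    and z_init: "\<And>\<omega>. z 0 \<omega> = z0"
    and z_step: "\<And>n \<omega>. z (Suc n) \<omega> = z n \<omega> - alpha n *\<^sub>R (g n \<omega> + grad_env lam \<phi> (z n \<omega>))"
    and x_def: "\<And>n \<omega>. x n \<omega> = prox lam \<phi> (z n \<omega>)"
    and g_meas: "\<And>n. g n \<in> borel_measurable (Fs (Suc n))"
    and A2_int: "\<And>n b. b \<in> Basis \<Longrightarrow> integrable M (\<lambda>\<omega>. g n \<omega> \<bullet> b)"
    and A2_unbiased: "\<And>n b. b \<in> Basis \<Longrightarrow>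
          AE \<omega> in M. real_cond_exp M (Fs n) (\<lambda>\<omega>. g n \<omega> \<bullet> b) \<omega> = gf (x n \<omega>) \<bullet> b"
    and A2_var: "\<And>n. sigma n \<ge> 0"
    and A2_bound: "\<And>n. (\<integral>\<^sup>+ \<omega>. ennreal ((norm (g n \<omega> - gf (x n \<omega>)))^2) \<partial>M) \<le> ennreal ((sigma n)^2)"
    and alpha_pos: "\<And>n. alpha n > 0"
    and alpha_le: "\<And>n. alpha n \<le> T_const L lam / 5"
begin

abbreviation "GG \<equiv> L + 1/lam"
definition "ee n \<omega> = g n \<omega> - gf (x n \<omega>)"
abbreviation "SS \<equiv> Sq GG alpha ee"
definition "yy n \<omega> = z n \<omega> + SS n \<omega>"
definition "dd n \<omega> = FF (z n \<omega>) - FF (yy n \<omega>) + GG *\<^sub>R SS n \<omega>"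

lemma sq_2ab: fixes a b :: real shows "(2 * a * b)^2 = 4 * a^2 * b^2" by (simp add: power2_eq_square)
lemma sq_ab: fixes a b :: real shows "(a * b)^2 = a^2 * b^2" by (simp add: power2_eq_square)

lemma GG_pos: "GG > 0" using Lpos lam by (simp add: add_pos_pos)

lemma al1: "alpha n \<le> 1 / (8 * GG)" using step_conds(1)[OF Lpos lam alpha_pos alpha_le] .
lemma al2: "alpha n \<le> lam / 12" using step_conds(2)[OF Lpos lam alpha_pos alpha_le] .
lemma al3: "GG * alpha n \<le> 1" using step_conds(3)[OF Lpos lam alpha_pos alpha_le] .

lemma zs: "z (Suc n) \<omega> = z n \<omega> - alpha n *\<^sub>R (FF (z n \<omega>) + ee n \<omega>)"
  unfolding z_step ee_def F_nor_def grad_env_def x_def by (simp add: algebra_simps)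

lemma ys: "yy (Suc n) \<omega> = yy n \<omega> - alpha n *\<^sub>R (FF (yy n \<omega>) + dd n \<omega>)"
  unfolding yy_def dd_def zs by (simp add: algebra_simps)

lemma y0: "yy 0 \<omega> = z0" unfolding yy_def z_init by simp

lemma ddb: "norm (dd n \<omega>)^2 \<le> 4 * GG^2 * norm (SS n \<omega>)^2"
proof -
  have "norm (FF (z n \<omega>) - FF (yy n \<omega>)) \<le> GG * norm (z n \<omega> - yy n \<omega>)" by (rule FF_lip)
  also have "norm (z n \<omega> - yy n \<omega>) = norm (SS n \<omega>)" unfolding yy_def by simp
  finally have a: "norm (FF (z n \<omega>) - FF (yy n \<omega>)) \<le> GG * norm (SS n \<omega>)" .
  have "norm (dd n \<omega>) \<le> norm (FF (z n \<omega>) - FF (yy n \<omega>)) + norm (GG *\<^sub>R SS n \<omega>)"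
    unfolding dd_def by (rule norm_triangle_ineq)
  also have "norm (GG *\<^sub>R SS n \<omega>) = GG * norm (SS n \<omega>)" using GG_pos by simp
  finally have "norm (dd n \<omega>) \<le> 2 * GG * norm (SS n \<omega>)" using a by linarith
  then have "norm (dd n \<omega>)^2 \<le> (2 * GG * norm (SS n \<omega>))^2" by (simp add: power_mono)
  also have "(2 * GG * norm (SS n \<omega>))^2 = 4 * GG^2 * norm (SS n \<omega>)^2" by (rule sq_2ab)
  finally show ?thesis .
qed

lemma Hpath: "HH (yy n \<omega>) \<le> HH z0 - xi / 4 * (\<Sum>i<n. alpha i * norm (FF (yy i \<omega>))^2)
                 + 2 * (\<Sum>i<n. alpha i * norm (dd i \<omega>)^2)"
proof (induction n)
  case 0 then show ?case using y0 by simp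
next
  case (Suc n)
  have "HH (yy (Suc n) \<omega>) \<le> HH (yy n \<omega>) - (xi / 4) * alpha n * norm (FF (yy n \<omega>))^2 + 2 * alpha n * norm (dd n \<omega>)^2"
    using one_step[OF alpha_pos al1 al2 ys] .
  then show ?case using Suc by (simp add: algebra_simps)
qed

lemma FFz_bound: "norm (FF (z n \<omega>))^2 \<le> 2 * norm (FF (yy n \<omega>))^2 + 2 * GG^2 * norm (SS n \<omega>)^2"
proof -
  have "norm (FF (z n \<omega>) - FF (yy n \<omega>)) \<le> GG * norm (z n \<omega> - yy n \<omega>)" by (rule FF_lip)
  also have "norm (z n \<omega> - yy n \<omega>) = norm (SS n \<omega>)" unfolding yy_def by simp
  finally have a: "norm (FF (z n \<omega>) - FF (yy n \<omega>))^2 \<le> (GG * norm (SS n \<omega>))^2" by (simp add: power_mono)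
  have "FF (z n \<omega>) = FF (yy n \<omega>) + (FF (z n \<omega>) - FF (yy n \<omega>))" by simp
  then have "norm (FF (z n \<omega>))^2 \<le> 2 * norm (FF (yy n \<omega>))^2 + 2 * norm (FF (z n \<omega>) - FF (yy n \<omega>))^2"
    by (metis norm2)
  moreover have "(GG * norm (SS n \<omega>))^2 = GG^2 * norm (SS n \<omega>)^2" by (rule sq_ab)
  ultimately show ?thesis using a by linarith
qed

lemma path_final:
  "(\<Sum>i<k. alpha i * norm (F_nat lam \<phi> gf (x i \<omega>))^2)
     \<le> 8 * lam^2 / xi * (HH z0 - psibar) + 65 * lam^2 * GG^2 / xi * (\<Sum>i<k. alpha i * norm (SS i \<omega>)^2)"
proof -
  define SF where "SF = (\<Sum>i<k. alpha i * norm (FF (yy i \<omega>))^2)"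
  define SS2 where "SS2 = (\<Sum>i<k. alpha i * norm (SS i \<omega>)^2)"
  define SD where "SD = (\<Sum>i<k. alpha i * norm (dd i \<omega>)^2)"
  define G2 where "G2 = GG^2"
  define H0 where "H0 = HH z0 - psibar"
  have G2p: "G2 \<ge> 0" unfolding G2_def by simp
  have apos: "\<And>i. alpha i \<ge> 0" using alpha_pos less_imp_le by blast
  have SS2p: "SS2 \<ge> 0" unfolding SS2_def using apos by (intro sum_nonneg) auto
  have SD: "SD \<le> 4 * G2 * SS2"
  proof -
    have "SD \<le> (\<Sum>i<k. alpha i * ((4 * G2) * norm (SS i \<omega>)^2))"
      unfolding SD_def G2_def using apos ddb by (intro sum_mono mult_left_mono) auto
    also have "\<dots> = 4 * G2 * SS2" unfolding SS2_def by (rule gen_sum2)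
    finally show ?thesis .
  qed
  have "psibar \<le> HH (yy k \<omega>)" by (rule HH_lower)
  then have "psibar \<le> HH z0 - xi / 4 * SF + 2 * SD" using Hpath[of k \<omega>] unfolding SF_def SD_def by linarith
  then have h1: "xi / 4 * SF \<le> H0 + 8 * (G2 * SS2)" using SD unfolding H0_def by linarith
  have "xi * SF = 4 * (xi / 4 * SF)" by simp
  also have "\<dots> \<le> 4 * (H0 + 8 * (G2 * SS2))" using h1 by simp
  also have "\<dots> = 4 * H0 + 32 * G2 * SS2" by simp
  finally have "xi * SF \<le> 4 * H0 + 32 * G2 * SS2" .
  then have SFb: "SF \<le> 4 * H0 / xi + 32 * G2 * SS2 / xi" by (rule gen_div[OF xi_pos])
  have "(\<Sum>i<k. alpha i * norm (F_nat lam \<phi> gf (x i \<omega>))^2)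
      \<le> (\<Sum>i<k. alpha i * (lam^2 * (2 * norm (FF (yy i \<omega>))^2 + 2 * G2 * norm (SS i \<omega>)^2)))"
  proof (intro sum_mono mult_left_mono)
    fix i
    have "norm (F_nat lam \<phi> gf (x i \<omega>)) \<le> lam * norm (FF (z i \<omega>))" unfolding x_def by (rule Fnat_bound)
    then have "norm (F_nat lam \<phi> gf (x i \<omega>))^2 \<le> (lam * norm (FF (z i \<omega>)))^2" by (simp add: power_mono)
    also have "\<dots> = lam^2 * norm (FF (z i \<omega>))^2" by (rule sq_ab)
    also have "\<dots> \<le> lam^2 * (2 * norm (FF (yy i \<omega>))^2 + 2 * G2 * norm (SS i \<omega>)^2)"
      unfolding G2_def using FFz_bound by (intro mult_left_mono) auto
    finally show "norm (F_nat lam \<phi> gf (x i \<omega>))^2 \<le> lam^2 * (2 * norm (FF (yy i \<omega>))^2 + 2 * G2 * norm (SS i \<omega>)^2)" .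
  qed (use apos in auto)
  also have "\<dots> = 2 * lam^2 * SF + 2 * lam^2 * G2 * SS2" unfolding SF_def SS2_def by (rule gen_sum1)
  also have "\<dots> \<le> 2 * lam^2 * (4 * H0 / xi + 32 * G2 * SS2 / xi) + 2 * lam^2 * G2 * SS2"
    using SFb by (intro add_right_mono mult_left_mono) auto
  also have "\<dots> \<le> 8 * lam^2 / xi * H0 + 65 * lam^2 * G2 / xi * SS2"
  proof (rule gen_fin[OF xi_pos _ _ G2p SS2p])
    show "2 \<le> 1 / xi" using xi_le xi_pos by (simp add: field_simps)
  qed simp
  finally show ?thesis unfolding SS2_def H0_def G2_def .
qed

end

lemma le_one_plus_sq: fixes t :: real assumes "t \<ge> 0" shows "t \<le> 1 + t^2"
proof -
  have "0 \<le> (t - 1)^2" by simp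
  then have "2 * t \<le> 1 + t^2" by (simp add: power2_eq_square algebra_simps)
  then show ?thesis using assms by linarith
qed

context mainloc
begin

lemma gf_meas[measurable]: "gf \<in> borel_measurable borel"
  by (rule borel_measurable_continuous_onI[OF gf_cont])

lemma genv_meas[measurable]: "grad_env lam \<phi> \<in> borel_measurable borel"
proof -
  have "grad_env lam \<phi> = (\<lambda>v. (1/lam) *\<^sub>R (v - p v))" unfolding grad_env_def by (rule ext) simp
  also have "\<dots> \<in> borel_measurable borel" by measurable
  finally show ?thesis .
qed

lemma FF_meas[measurable]: "FF \<in> borel_measurable borel"
proof -
  have "FF = (\<lambda>v. gf (p v) + (1/lam) *\<^sub>R (v - p v))" unfolding F_nor_def by (rule ext) simp
  also have "\<dots> \<in> borel_measurable borel" by measurable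
  finally show ?thesis .
qed

lemma Fnat_meas[measurable]: "F_nat lam \<phi> gf \<in> borel_measurable borel"
proof -
  have "F_nat lam \<phi> gf = (\<lambda>v. v - p (v - lam *\<^sub>R gf v))" unfolding F_nat_def by (rule ext) simp
  also have "\<dots> \<in> borel_measurable borel" by measurable
  finally show ?thesis .
qed

lemma space_F: "space (Fs n) = space M" using filt_sub[of n] unfolding subalgebra_def by simp

lemma sub_suc: "subalgebra (Fs (Suc n)) (Fs n)"
  unfolding subalgebra_def using filt_mono[of n] space_F by simp

lemma z_meas: "z n \<in> borel_measurable (Fs n)"
proof (induction n)
  case 0
  have "z 0 = (\<lambda>\<omega>. z0)" using z_init by (rule ext)
  then show ?case by simp
next
  case (Suc n)
  have [measurable]: "z n \<in> borel_measurable (Fs (Suc n))" by (rule measurable_from_subalg[OF sub_suc Suc])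
  have [measurable]: "g n \<in> borel_measurable (Fs (Suc n))" by (rule g_meas)
  have "z (Suc n) = (\<lambda>\<omega>. z n \<omega> - alpha n *\<^sub>R (g n \<omega> + grad_env lam \<phi> (z n \<omega>)))" by (rule ext) (rule z_step)
  also have "\<dots> \<in> borel_measurable (Fs (Suc n))" by measurable
  finally show ?case .
qed

lemma x_meas: "x n \<in> borel_measurable (Fs n)"
proof -
  have [measurable]: "z n \<in> borel_measurable (Fs n)" by (rule z_meas)
  have "x n = (\<lambda>\<omega>. p (z n \<omega>))" by (rule ext) (rule x_def)
  also have "\<dots> \<in> borel_measurable (Fs n)" by measurable
  finally show ?thesis .
qed

lemma e_meas: "ee n \<in> borel_measurable (Fs (Suc n))"
proof -
  have [measurable]: "x n \<in> borel_measurable (Fs (Suc n))" by (rule measurable_from_subalg[OF sub_suc x_meas])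
  have [measurable]: "g n \<in> borel_measurable (Fs (Suc n))" by (rule g_meas)
  have "ee n = (\<lambda>\<omega>. g n \<omega> - gf (x n \<omega>))" by (rule ext) (simp add: ee_def)
  also have "\<dots> \<in> borel_measurable (Fs (Suc n))" by measurable
  finally show ?thesis .
qed

lemma S_meas: "SS n \<in> borel_measurable (Fs n)"
proof (induction n)
  case 0 then show ?case by simp
next
  case (Suc n)
  have [measurable]: "SS n \<in> borel_measurable (Fs (Suc n))" by (rule measurable_from_subalg[OF sub_suc Suc])
  have [measurable]: "ee n \<in> borel_measurable (Fs (Suc n))" by (rule e_meas)
  show ?case by simp
qed

lemma z_measM[measurable]: "z n \<in> borel_measurable M" by (rule measurable_from_subalg[OF filt_sub z_meas])
lemma x_measM[measurable]: "x n \<in> borel_measurable M" by (rule measurable_from_subalg[OF filt_sub x_meas])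
lemma e_measM[measurable]: "ee n \<in> borel_measurable M" by (rule measurable_from_subalg[OF filt_sub e_meas])
lemma S_measM[measurable]: "SS n \<in> borel_measurable M" by (rule measurable_from_subalg[OF filt_sub S_meas])
lemma g_measM[measurable]: "g n \<in> borel_measurable M" by (rule measurable_from_subalg[OF filt_sub g_meas])

lemma e_sq_int: "integrable M (\<lambda>\<omega>. norm (ee n \<omega>)^2)"
proof (rule integrableI_bounded)
  show "(\<lambda>\<omega>. norm (ee n \<omega>)^2) \<in> borel_measurable M" by measurable
  have "(\<integral>\<^sup>+ \<omega>. ennreal (norm (norm (ee n \<omega>)^2)) \<partial>M) = (\<integral>\<^sup>+ \<omega>. ennreal ((norm (g n \<omega> - gf (x n \<omega>)))^2) \<partial>M)"
    by (simp add: ee_def)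
  also have "\<dots> \<le> ennreal ((sigma n)^2)" by (rule A2_bound)
  also have "\<dots> < \<infinity>" by simp
  finally show "(\<integral>\<^sup>+ \<omega>. ennreal (norm (norm (ee n \<omega>)^2)) \<partial>M) < \<infinity>" .
qed

lemma e_sq_le: "(\<integral>\<omega>. norm (ee n \<omega>)^2 \<partial>M) \<le> (sigma n)^2"
proof -
  have "ennreal (\<integral>\<omega>. norm (ee n \<omega>)^2 \<partial>M) = (\<integral>\<^sup>+ \<omega>. ennreal (norm (ee n \<omega>)^2) \<partial>M)"
    by (rule nn_integral_eq_integral[OF e_sq_int, symmetric]) simp
  also have "\<dots> = (\<integral>\<^sup>+ \<omega>. ennreal ((norm (g n \<omega> - gf (x n \<omega>)))^2) \<partial>M)" by (simp add: ee_def)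
  also have "\<dots> \<le> ennreal ((sigma n)^2)" by (rule A2_bound)
  finally show ?thesis by (simp add: ennreal_le_iff)
qed

lemma e_norm_int: "integrable M (\<lambda>\<omega>. norm (ee n \<omega>))"
proof -
  interpret prob_space M by (rule prob)
  have i: "integrable M (\<lambda>\<omega>. 1 + norm (ee n \<omega>)^2)" using e_sq_int by simp
  show ?thesis
  proof (rule Bochner_Integration.integrable_bound[OF i])
    show "(\<lambda>\<omega>. norm (ee n \<omega>)) \<in> borel_measurable M" by measurable
    show "AE \<omega> in M. norm (norm (ee n \<omega>)) \<le> norm (1 + norm (ee n \<omega>)^2)"
    proof (intro AE_I2)
      fix \<omega>
      have "norm (ee n \<omega>) \<le> 1 + norm (ee n \<omega>)^2" by (rule le_one_plus_sq) simp
      then show "norm (norm (ee n \<omega>)) \<le> norm (1 + norm (ee n \<omega>)^2)" by simp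
    qed
  qed
qed

end

lemma ab_le_sq: fixes a b :: real assumes "a \<ge> 0" "b \<ge> 0" shows "a * b \<le> a^2 + b^2"
proof -
  have "0 \<le> (a - b)^2" by simp
  then have "2 * (a * b) \<le> a^2 + b^2" by (simp add: power2_eq_square algebra_simps)
  moreover have "0 \<le> a * b" using assms by simp
  ultimately show ?thesis by linarith
qed

lemma integral_sum_gen:
  fixes h :: "'b \<Rightarrow> 'c \<Rightarrow> real"
  assumes "\<And>b. b \<in> I \<Longrightarrow> integrable N (\<lambda>\<omega>. h b \<omega>)"
  shows "(\<integral>\<omega>. (\<Sum>b\<in>I. h b \<omega>) \<partial>N) = (\<Sum>b\<in>I. \<integral>\<omega>. h b \<omega> \<partial>N)"
  by (rule Bochner_Integration.integral_sum) (use assms in auto)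

context mainloc
begin

lemma S_sq_int: "integrable M (\<lambda>\<omega>. norm (SS n \<omega>)^2)"
proof (induction n)
  case 0 then show ?case by simp
next
  case (Suc n)
  define c where "c = 1 - GG * alpha n"
  have i: "integrable M (\<lambda>\<omega>. 2 * c^2 * norm (SS n \<omega>)^2 + 2 * (alpha n)^2 * norm (ee n \<omega>)^2)"
    using Suc e_sq_int by simp
  show ?case
  proof (rule Bochner_Integration.integrable_bound[OF i])
    show "(\<lambda>\<omega>. norm (SS (Suc n) \<omega>)^2) \<in> borel_measurable M" by measurable
    show "AE \<omega> in M. norm (norm (SS (Suc n) \<omega>)^2) \<le> norm (2 * c^2 * norm (SS n \<omega>)^2 + 2 * (alpha n)^2 * norm (ee n \<omega>)^2)"
    proof (intro AE_I2)
      fix \<omega>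
      have "norm (SS (Suc n) \<omega>)^2 \<le> 2 * norm (c *\<^sub>R SS n \<omega>)^2 + 2 * norm (alpha n *\<^sub>R ee n \<omega>)^2"
        unfolding c_def Sq.simps by (rule norm2)
      also have "\<dots> = 2 * c^2 * norm (SS n \<omega>)^2 + 2 * (alpha n)^2 * norm (ee n \<omega>)^2"
        by (simp add: power_mult_distrib)
      finally show "norm (norm (SS (Suc n) \<omega>)^2) \<le> norm (2 * c^2 * norm (SS n \<omega>)^2 + 2 * (alpha n)^2 * norm (ee n \<omega>)^2)"
        by simp
    qed
  qed
qed

lemma bound_int: "integrable M (\<lambda>\<omega>. norm (SS n \<omega>)^2 + norm (ee n \<omega>)^2)"
  using S_sq_int e_sq_int by simp

lemma cross_comp_int: "b \<in> Basis \<Longrightarrow> integrable M (\<lambda>\<omega>. (SS n \<omega> \<bullet> b) * (ee n \<omega> \<bullet> b))"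
proof (rule Bochner_Integration.integrable_bound[OF bound_int])
  assume b: "b \<in> Basis"
  show "(\<lambda>\<omega>. (SS n \<omega> \<bullet> b) * (ee n \<omega> \<bullet> b)) \<in> borel_measurable M" by measurable
  show "AE \<omega> in M. norm ((SS n \<omega> \<bullet> b) * (ee n \<omega> \<bullet> b)) \<le> norm (norm (SS n \<omega>)^2 + norm (ee n \<omega>)^2)"
  proof (intro AE_I2)
    fix \<omega>
    have "norm ((SS n \<omega> \<bullet> b) * (ee n \<omega> \<bullet> b)) = \<bar>SS n \<omega> \<bullet> b\<bar> * \<bar>ee n \<omega> \<bullet> b\<bar>" by (simp add: abs_mult)
    also have "\<dots> \<le> norm (SS n \<omega>) * norm (ee n \<omega>)"
      using Basis_le_norm[OF b] by (intro mult_mono) auto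
    also have "\<dots> \<le> norm (SS n \<omega>)^2 + norm (ee n \<omega>)^2" by (rule ab_le_sq) auto
    finally show "norm ((SS n \<omega> \<bullet> b) * (ee n \<omega> \<bullet> b)) \<le> norm (norm (SS n \<omega>)^2 + norm (ee n \<omega>)^2)" by simp
  qed
qed

lemma cross_int: "integrable M (\<lambda>\<omega>. SS n \<omega> \<bullet> ee n \<omega>)"
proof (rule Bochner_Integration.integrable_bound[OF bound_int])
  show "(\<lambda>\<omega>. SS n \<omega> \<bullet> ee n \<omega>) \<in> borel_measurable M" by measurable
  show "AE \<omega> in M. norm (SS n \<omega> \<bullet> ee n \<omega>) \<le> norm (norm (SS n \<omega>)^2 + norm (ee n \<omega>)^2)"
  proof (intro AE_I2)
    fix \<omega>
    have "norm (SS n \<omega> \<bullet> ee n \<omega>) \<le> norm (SS n \<omega>) * norm (ee n \<omega>)" by (simp add: Cauchy_Schwarz_ineq2)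
    also have "\<dots> \<le> norm (SS n \<omega>)^2 + norm (ee n \<omega>)^2" by (rule ab_le_sq) auto
    finally show "norm (SS n \<omega> \<bullet> ee n \<omega>) \<le> norm (norm (SS n \<omega>)^2 + norm (ee n \<omega>)^2)" by simp
  qed
qed

lemma sfs: "sigma_finite_subalgebra M (Fs n)"
proof (rule finite_measure_subalgebra_is_sigma_finite)
  show "finite_measure_subalgebra M (Fs n)"
    unfolding finite_measure_subalgebra_def finite_measure_subalgebra_axioms_def
    using prob filt_sub[of n] unfolding prob_space_def by simp
qed

lemma eb_int: "b \<in> Basis \<Longrightarrow> integrable M (\<lambda>\<omega>. ee n \<omega> \<bullet> b)"
proof (rule Bochner_Integration.integrable_bound[OF e_norm_int])
  assume b: "b \<in> Basis"
  show "(\<lambda>\<omega>. ee n \<omega> \<bullet> b) \<in> borel_measurable M" by measurable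
  show "AE \<omega> in M. norm (ee n \<omega> \<bullet> b) \<le> norm (norm (ee n \<omega>))"
    using Basis_le_norm[OF b] by simp
qed

lemma ce_zero:
  assumes b: "b \<in> Basis"
  shows "AE \<omega> in M. real_cond_exp M (Fs n) (\<lambda>\<omega>. ee n \<omega> \<bullet> b) \<omega> = 0"
proof -
  interpret S: sigma_finite_subalgebra M "Fs n" by (rule sfs)
  have [measurable]: "x n \<in> borel_measurable (Fs n)" by (rule x_meas)
  define h where "h = (\<lambda>\<omega>. gf (x n \<omega>) \<bullet> b)"
  have hF: "h \<in> borel_measurable (Fs n)" unfolding h_def by measurable
  have heq: "h = (\<lambda>\<omega>. g n \<omega> \<bullet> b - ee n \<omega> \<bullet> b)" unfolding h_def ee_def
    by (rule ext) (simp add: inner_diff_left)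
  have hint: "integrable M h" unfolding heq using A2_int[OF b] eb_int[OF b] by simp
  have eeq: "(\<lambda>\<omega>. ee n \<omega> \<bullet> b) = (\<lambda>\<omega>. g n \<omega> \<bullet> b - h \<omega>)" unfolding h_def ee_def
    by (rule ext) (simp add: inner_diff_left)
  have "AE \<omega> in M. real_cond_exp M (Fs n) (\<lambda>\<omega>. g n \<omega> \<bullet> b - h \<omega>) \<omega>
          = real_cond_exp M (Fs n) (\<lambda>\<omega>. g n \<omega> \<bullet> b) \<omega> - real_cond_exp M (Fs n) h \<omega>"
    by (rule S.real_cond_exp_diff[OF A2_int[OF b] hint])
  moreover have "AE \<omega> in M. real_cond_exp M (Fs n) (\<lambda>\<omega>. g n \<omega> \<bullet> b) \<omega> = h \<omega>"
    using A2_unbiased[OF b] unfolding h_def .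
  moreover have "AE \<omega> in M. real_cond_exp M (Fs n) h \<omega> = h \<omega>"
    by (rule S.real_cond_exp_F_meas[OF hint hF])
  ultimately show ?thesis unfolding eeq by eventually_elim simp
qed

lemma cross_comp_zero:
  assumes b: "b \<in> Basis"
  shows "(\<integral>\<omega>. (SS n \<omega> \<bullet> b) * (ee n \<omega> \<bullet> b) \<partial>M) = 0"
proof -
  interpret S: sigma_finite_subalgebra M "Fs n" by (rule sfs)
  have [measurable]: "SS n \<in> borel_measurable (Fs n)" by (rule S_meas)
  have fF: "(\<lambda>\<omega>. SS n \<omega> \<bullet> b) \<in> borel_measurable (Fs n)" by measurable
  have gM: "(\<lambda>\<omega>. ee n \<omega> \<bullet> b) \<in> borel_measurable M" by measurable
  have "(\<integral>\<omega>. (SS n \<omega> \<bullet> b) * (ee n \<omega> \<bullet> b) \<partial>M)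
      = (\<integral>\<omega>. (SS n \<omega> \<bullet> b) * real_cond_exp M (Fs n) (\<lambda>\<omega>. ee n \<omega> \<bullet> b) \<omega> \<partial>M)"
    by (rule S.real_cond_exp_intg(2)[OF cross_comp_int[OF b] fF gM, symmetric])
  also have "\<dots> = (\<integral>\<omega>. 0 \<partial>M)"
  proof (rule integral_cong_AE)
    show "(\<lambda>\<omega>. (SS n \<omega> \<bullet> b) * real_cond_exp M (Fs n) (\<lambda>\<omega>. ee n \<omega> \<bullet> b) \<omega>) \<in> borel_measurable M"
      by measurable
    show "(\<lambda>\<omega>. 0::real) \<in> borel_measurable M" by simp
    show "AE \<omega> in M. (SS n \<omega> \<bullet> b) * real_cond_exp M (Fs n) (\<lambda>\<omega>. ee n \<omega> \<bullet> b) \<omega> = 0"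
      using ce_zero[OF b, where n=n] by eventually_elim simp
  qed
  finally show ?thesis by simp
qed

lemma cross_zero: "(\<integral>\<omega>. SS n \<omega> \<bullet> ee n \<omega> \<partial>M) = 0"
proof -
  have "(\<integral>\<omega>. SS n \<omega> \<bullet> ee n \<omega> \<partial>M) = (\<integral>\<omega>. (\<Sum>b\<in>Basis. (SS n \<omega> \<bullet> b) * (ee n \<omega> \<bullet> b)) \<partial>M)"
    by (simp add: euclidean_inner[of "SS n _" "ee n _"])
  also have "\<dots> = (\<Sum>b\<in>Basis. (\<integral>\<omega>. (SS n \<omega> \<bullet> b) * (ee n \<omega> \<bullet> b) \<partial>M))"
    by (rule integral_sum_gen) (rule cross_comp_int)
  also have "\<dots> = 0" using cross_comp_zero by simp
  finally show ?thesis .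
qed

definition "sv n = (\<integral>\<omega>. norm (SS n \<omega>)^2 \<partial>M)"

lemma sv_nonneg: "sv n \<ge> 0" unfolding sv_def by simp

lemma s_rec: "sv (Suc n) \<le> (1 - GG * alpha n) * sv n + (alpha n)^2 * (sigma n)^2"
proof -
  define c where "c = 1 - GG * alpha n"
  have c01: "0 \<le> c" "c \<le> 1" unfolding c_def using al3[of n] GG_pos alpha_pos[of n] by auto
  have pw: "norm (SS (Suc n) \<omega>)^2 = c^2 * norm (SS n \<omega>)^2 + (2 * c * alpha n) * (SS n \<omega> \<bullet> ee n \<omega>)
              + (alpha n)^2 * norm (ee n \<omega>)^2" for \<omega>
    unfolding c_def[symmetric] Sq.simps
    by (simp only: power2_norm_eq_inner) (simp add: inner_add_left inner_add_right inner_commute algebra_simps power2_eq_square)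
  have "sv (Suc n) = (\<integral>\<omega>. c^2 * norm (SS n \<omega>)^2 + (2 * c * alpha n) * (SS n \<omega> \<bullet> ee n \<omega>)
              + (alpha n)^2 * norm (ee n \<omega>)^2 \<partial>M)" unfolding sv_def pw ..
  also have "\<dots> = c^2 * sv n + (2 * c * alpha n) * (\<integral>\<omega>. SS n \<omega> \<bullet> ee n \<omega> \<partial>M)
              + (alpha n)^2 * (\<integral>\<omega>. norm (ee n \<omega>)^2 \<partial>M)"
    unfolding sv_def using S_sq_int cross_int e_sq_int by simp
  also have "\<dots> = c^2 * sv n + (alpha n)^2 * (\<integral>\<omega>. norm (ee n \<omega>)^2 \<partial>M)" using cross_zero by simp
  also have "\<dots> \<le> c * sv n + (alpha n)^2 * (sigma n)^2"
  proof (intro add_mono mult_left_mono mult_right_mono)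
    show "c^2 \<le> c" using c01 by (simp add: power2_eq_square mult_left_le_one_le)
  qed (use sv_nonneg e_sq_le in auto)
  finally show ?thesis unfolding c_def .
qed

lemma s_sum: "sv k + GG * (\<Sum>i<k. alpha i * sv i) \<le> (\<Sum>i<k. (alpha i)^2 * (sigma i)^2)"
proof (induction k)
  case 0 then show ?case by (simp add: sv_def)
next
  case (Suc k)
  have "sv (Suc k) + GG * (\<Sum>i<Suc k. alpha i * sv i)
      = sv (Suc k) + GG * alpha k * sv k + GG * (\<Sum>i<k. alpha i * sv i)" by (simp add: algebra_simps)
  also have "\<dots> \<le> (1 - GG * alpha k) * sv k + (alpha k)^2 * (sigma k)^2 + GG * alpha k * sv k + GG * (\<Sum>i<k. alpha i * sv i)"
    using s_rec[of k] by simp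
  also have "\<dots> = sv k + GG * (\<Sum>i<k. alpha i * sv i) + (alpha k)^2 * (sigma k)^2" by (simp add: algebra_simps)
  also have "\<dots> \<le> (\<Sum>i<k. (alpha i)^2 * (sigma i)^2) + (alpha k)^2 * (sigma k)^2" using Suc by simp
  finally show ?case by simp
qed

end

lemma gen_b0: fixes g l c :: real assumes "g > 0" "c > 0" shows "65 * l * g^2 / c / g = 65 * g * (l / c)"
  using assms by (simp add: power2_eq_square field_simps)

context mainloc
begin

lemma weighted_nn:
  "(\<Sum>i<k. ennreal (alpha i) * (\<integral>\<^sup>+ \<omega>. ennreal ((norm (F_nat lam \<phi> gf (x i \<omega>)))^2) \<partial>M))
    = (\<integral>\<^sup>+ \<omega>. ennreal (\<Sum>i<k. alpha i * (norm (F_nat lam \<phi> gf (x i \<omega>)))^2) \<partial>M)"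
proof -
  have apos: "\<And>i. alpha i \<ge> 0" using alpha_pos less_imp_le by blast
  have "(\<integral>\<^sup>+ \<omega>. ennreal (\<Sum>i<k. alpha i * (norm (F_nat lam \<phi> gf (x i \<omega>)))^2) \<partial>M)
      = (\<integral>\<^sup>+ \<omega>. (\<Sum>i<k. ennreal (alpha i) * ennreal ((norm (F_nat lam \<phi> gf (x i \<omega>)))^2)) \<partial>M)"
  proof (rule nn_integral_cong)
    fix \<omega>
    have "ennreal (\<Sum>i<k. alpha i * (norm (F_nat lam \<phi> gf (x i \<omega>)))^2)
        = (\<Sum>i<k. ennreal (alpha i * (norm (F_nat lam \<phi> gf (x i \<omega>)))^2))"
      by (rule sum_ennreal[symmetric]) (use apos in simp)
    also have "\<dots> = (\<Sum>i<k. ennreal (alpha i) * ennreal ((norm (F_nat lam \<phi> gf (x i \<omega>)))^2))"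
      using apos by (simp add: ennreal_mult)
    finally show "ennreal (\<Sum>i<k. alpha i * (norm (F_nat lam \<phi> gf (x i \<omega>)))^2)
        = (\<Sum>i<k. ennreal (alpha i) * ennreal ((norm (F_nat lam \<phi> gf (x i \<omega>)))^2))" .
  qed
  also have "\<dots> = (\<Sum>i<k. \<integral>\<^sup>+ \<omega>. ennreal (alpha i) * ennreal ((norm (F_nat lam \<phi> gf (x i \<omega>)))^2) \<partial>M)"
    by (rule nn_integral_sum) measurable
  also have "\<dots> = (\<Sum>i<k. ennreal (alpha i) * (\<integral>\<^sup>+ \<omega>. ennreal ((norm (F_nat lam \<phi> gf (x i \<omega>)))^2) \<partial>M))"
    by (intro sum.cong refl nn_integral_cmult) measurable
  finally show ?thesis by simp
qed

lemma rhs_int: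
  "(\<integral>\<^sup>+ \<omega>. ennreal (A0 + B0 * (\<Sum>i<k. alpha i * norm (SS i \<omega>)^2)) \<partial>M)
     = ennreal (A0 + B0 * (\<Sum>i<k. alpha i * sv i))" if "A0 \<ge> 0" "B0 \<ge> 0"
proof -
  interpret prob_space M by (rule prob)
  have apos: "\<And>i. alpha i \<ge> 0" using alpha_pos less_imp_le by blast
  have int: "integrable M (\<lambda>\<omega>. A0 + B0 * (\<Sum>i<k. alpha i * norm (SS i \<omega>)^2))"
    using S_sq_int by simp
  have "(\<integral>\<^sup>+ \<omega>. ennreal (A0 + B0 * (\<Sum>i<k. alpha i * norm (SS i \<omega>)^2)) \<partial>M)
       = ennreal (\<integral>\<omega>. A0 + B0 * (\<Sum>i<k. alpha i * norm (SS i \<omega>)^2) \<partial>M)"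
  proof (rule nn_integral_eq_integral[OF int], intro AE_I2)
    fix \<omega>
    show "0 \<le> A0 + B0 * (\<Sum>i<k. alpha i * norm (SS i \<omega>)^2)"
      using that apos by (intro add_nonneg_nonneg mult_nonneg_nonneg sum_nonneg) auto
  qed
  also have "(\<integral>\<omega>. A0 + B0 * (\<Sum>i<k. alpha i * norm (SS i \<omega>)^2) \<partial>M)
      = A0 + B0 * (\<Sum>i<k. alpha i * sv i)"
    using S_sq_int by (simp add: sv_def prob_space)
  finally show ?thesis .
qed

lemma final:
  assumes k: "k \<ge> 1"
  shows "Min ((\<lambda>i. \<integral>\<^sup>+ \<omega>. ennreal ((norm (F_nat lam \<phi> gf (x i \<omega>)))^2) \<partial>M) ` {..<k})
     \<le> ennreal (
        (10 * (1 + lam * lambar_const L lam)^2 * lam^2 / xi_const L lam)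
          * (H_merit (xi_const L lam) lam f gf \<phi> z0 - psibar) / (\<Sum>i<k. alpha i)
      + max (200 * (1 + lam * lambar_const L lam)^2 * lam^2 / (T_const L lam * xi_const L lam))
            (8 * lam^2 * (lambar_const L lam)^2 * T_const L lam)
          * (\<Sum>i<k. (alpha i)^2 * (sigma i)^2) / (\<Sum>i<k. alpha i))"
proof -
  define a where "a = (\<lambda>i. \<integral>\<^sup>+ \<omega>. ennreal ((norm (F_nat lam \<phi> gf (x i \<omega>)))^2) \<partial>M)"
  define Sa where "Sa = (\<Sum>i<k. alpha i)"
  define S2 where "S2 = (\<Sum>i<k. (alpha i)^2 * (sigma i)^2)"
  define H0 where "H0 = HH z0 - psibar"
  define lb where "lb = lambar_const L lam"
  define T where "T = T_const L lam"
  define A0 where "A0 = 8 * lam^2 / xi * H0"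
  define B0 where "B0 = 65 * lam^2 * GG^2 / xi"
  have apos: "\<And>i. alpha i \<ge> 0" using alpha_pos less_imp_le by blast
  have H0: "H0 \<ge> 0" unfolding H0_def using HH_lower[of z0] by simp
  have A0: "A0 \<ge> 0" unfolding A0_def using H0 xi_pos by simp
  have B0: "B0 \<ge> 0" unfolding B0_def using xi_pos by simp
  have "0 \<in> {..<k}" using k by simp
  then have kne0: "{..<k} \<noteq> {}" by blast
  have Sa: "Sa > 0" unfolding Sa_def using kne0 alpha_pos
    by (intro sum_pos) auto
  have S2: "S2 \<ge> 0" unfolding S2_def by (intro sum_nonneg) simp
  have es: "ennreal Sa = (\<Sum>i<k. ennreal (alpha i))" unfolding Sa_def
    by (rule sum_ennreal[symmetric]) (use apos in auto)
  have "ennreal Sa * Min (a ` {..<k}) = (\<Sum>i<k. ennreal (alpha i) * Min (a ` {..<k}))"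
    unfolding es by (simp add: sum_distrib_right)
  also have "\<dots> \<le> (\<Sum>i<k. ennreal (alpha i) * a i)"
    by (intro sum_mono mult_left_mono) auto
  also have "\<dots> = (\<integral>\<^sup>+ \<omega>. ennreal (\<Sum>i<k. alpha i * (norm (F_nat lam \<phi> gf (x i \<omega>)))^2) \<partial>M)"
    unfolding a_def by (rule weighted_nn)
  also have "\<dots> \<le> (\<integral>\<^sup>+ \<omega>. ennreal (A0 + B0 * (\<Sum>i<k. alpha i * norm (SS i \<omega>)^2)) \<partial>M)"
    by (intro nn_integral_mono ennreal_leI) (use path_final in \<open>simp add: A0_def B0_def H0_def\<close>)
  also have "\<dots> = ennreal (A0 + B0 * (\<Sum>i<k. alpha i * sv i))" by (rule rhs_int[OF A0 B0])
  also have "\<dots> \<le> ennreal (A0 + B0 / GG * S2)"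
  proof (rule ennreal_leI)
    have "GG * (\<Sum>i<k. alpha i * sv i) \<le> S2" unfolding S2_def using s_sum[of k] sv_nonneg[of k] by linarith
    then have "(\<Sum>i<k. alpha i * sv i) \<le> S2 / GG" using GG_pos by (simp add: field_simps)
    then have "B0 * (\<Sum>i<k. alpha i * sv i) \<le> B0 * (S2 / GG)" using B0 by (intro mult_left_mono) auto
    then show "A0 + B0 * (\<Sum>i<k. alpha i * sv i) \<le> A0 + B0 / GG * S2" by simp
  qed
  finally have wb: "ennreal Sa * Min (a ` {..<k}) \<le> ennreal (A0 + B0 / GG * S2)" .
  have "Min (a ` {..<k}) = ennreal (1 / Sa) * (ennreal Sa * Min (a ` {..<k}))"
    using Sa by (simp add: ennreal_mult[symmetric] mult.assoc[symmetric])
  also have "\<dots> \<le> ennreal (1 / Sa) * ennreal (A0 + B0 / GG * S2)" by (rule mult_left_mono[OF wb]) simp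
  also have "\<dots> = ennreal (1 / Sa * (A0 + B0 / GG * S2))"
  proof (rule ennreal_mult[symmetric])
    show "0 \<le> 1 / Sa" using Sa by simp
    show "0 \<le> A0 + B0 / GG * S2" using A0 B0 S2 GG_pos by simp
  qed
  also have "\<dots> = ennreal ((A0 + B0 / GG * S2) / Sa)" by simp
  finally have m1: "Min (a ` {..<k}) \<le> ennreal ((A0 + B0 / GG * S2) / Sa)" .
  have lb: "lb \<ge> L + 2/lam" unfolding lb_def by (rule lambar_ge[OF Lpos lam])
  have llb: "lam * lb \<ge> lam * L + 2"
  proof -
    have "lam * lb \<ge> lam * (L + 2/lam)" using lb lam by (intro mult_left_mono) auto
    moreover have "lam * (L + 2/lam) = lam * L + 2" using lam by (simp add: field_simps)
    ultimately show ?thesis by linarith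
  qed
  have ll0: "lam * L \<ge> 0" using lam Lpos by simp
  have q1: "1 \<le> (1 + lam * lb)^2"
  proof -
    have "1 \<le> 1 + lam * lb" using llb ll0 by linarith
    then show ?thesis by (simp add: one_le_power)
  qed
  have c1: "A0 \<le> 10 * (1 + lam * lb)^2 * lam^2 / xi * H0"
  proof -
    have "8 \<le> 10 * (1 + lam * lb)^2" using q1 by linarith
    then have "8 * (lam^2 / xi * H0) \<le> 10 * (1 + lam * lb)^2 * (lam^2 / xi * H0)"
      using H0 xi_pos by (intro mult_right_mono) auto
    then show ?thesis unfolding A0_def by (simp add: algebra_simps)
  qed
  have Tp: "T > 0" unfolding T_def by (rule T_props(1)[OF Lpos lam])
  have Tl: "T \<le> 4 * lam / 5" unfolding T_def by (rule T_props(2)[OF Lpos lam])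
  have c2: "B0 / GG \<le> 200 * (1 + lam * lb)^2 * lam^2 / (T * xi)"
  proof -
    have "GG * T \<le> GG * (4 * lam / 5)" using Tl GG_pos by (intro mult_left_mono) auto
    also have "\<dots> = 4/5 * (lam * L) + 4/5" using lam by (simp add: field_simps)
    also have "\<dots> \<le> 1 + lam * lb" using llb ll0 by linarith
    also have "\<dots> \<le> (1 + lam * lb)^2"
    proof -
      have "1 \<le> 1 + lam * lb" using llb ll0 by linarith
      then show ?thesis by (simp add: power2_eq_square)
    qed
    finally have "GG * T \<le> (1 + lam * lb)^2" .
    then have "65 * (GG * T) \<le> 200 * (1 + lam * lb)^2" using q1 by linarith
    then have "65 * GG \<le> 200 * (1 + lam * lb)^2 / T" using Tp by (simp add: field_simps)
    then have "65 * GG * (lam^2 / xi) \<le> 200 * (1 + lam * lb)^2 / T * (lam^2 / xi)"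
      using xi_pos by (intro mult_right_mono) auto
    moreover have "B0 / GG = 65 * GG * (lam^2 / xi)" unfolding B0_def
      by (rule gen_b0[OF GG_pos xi_pos])
    moreover have "200 * (1 + lam * lb)^2 / T * (lam^2 / xi) = 200 * (1 + lam * lb)^2 * lam^2 / (T * xi)"
      by (simp add: field_simps)
    ultimately show ?thesis by simp
  qed
  have c3: "B0 / GG \<le> max (200 * (1 + lam * lb)^2 * lam^2 / (T * xi)) (8 * lam^2 * lb^2 * T)"
    using c2 by (simp add: le_max_iff_disj)
  have fin: "(A0 + B0 / GG * S2) / Sa
      \<le> (10 * (1 + lam * lb)^2 * lam^2 / xi) * H0 / Sa
       + max (200 * (1 + lam * lb)^2 * lam^2 / (T * xi)) (8 * lam^2 * lb^2 * T) * S2 / Sa"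
  proof -
    have "B0 / GG * S2 \<le> max (200 * (1 + lam * lb)^2 * lam^2 / (T * xi)) (8 * lam^2 * lb^2 * T) * S2"
      using c3 S2 by (intro mult_right_mono) auto
    then have "A0 + B0 / GG * S2 \<le> (10 * (1 + lam * lb)^2 * lam^2 / xi) * H0
         + max (200 * (1 + lam * lb)^2 * lam^2 / (T * xi)) (8 * lam^2 * lb^2 * T) * S2"
      using c1 by (simp add: algebra_simps)
    then have "(A0 + B0 / GG * S2) / Sa \<le> ((10 * (1 + lam * lb)^2 * lam^2 / xi) * H0
         + max (200 * (1 + lam * lb)^2 * lam^2 / (T * xi)) (8 * lam^2 * lb^2 * T) * S2) / Sa"
      using Sa by (intro divide_right_mono) auto
    then show ?thesis by (simp add: add_divide_distrib)
  qed
  show ?thesis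
    using order_trans[OF m1 ennreal_leI[OF fin]]
    unfolding a_def Sa_def S2_def H0_def lb_def T_def by simp
qed

end

theorem theorem2p15:
  fixes M :: "'w measure" and F :: "nat \<Rightarrow> 'w measure"
    and \<phi> :: "'a::euclidean_space \<Rightarrow> ereal" and f :: "'a \<Rightarrow> real" and gf :: "'a \<Rightarrow> 'a"
    and lam L psibar :: real and alpha sigma :: "nat \<Rightarrow> real"
    and z0 :: 'a and z x g :: "nat \<Rightarrow> 'w \<Rightarrow> 'a" and k :: nat
  assumes prob: "prob_space M"
    and filt_sub: "\<And>n. subalgebra M (F n)"
    and filt_mono: "\<And>n. sets (F n) \<subseteq> sets (F (Suc n))"
    and phi_convex: "ext_convex \<phi>" and phi_lsc: "ext_lsc \<phi>" and phi_proper: "ext_proper \<phi>"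
    and f_grad: "\<And>y. (f has_derivative (\<lambda>h. gf y \<bullet> h)) (at y)"
    and gf_cont: "continuous_on UNIV gf"
    and lam_pos: "lam > 0"
    and z_init: "\<And>\<omega>. z 0 \<omega> = z0"
    and z_step: "\<And>n \<omega>. z (Suc n) \<omega> = z n \<omega> - alpha n *\<^sub>R (g n \<omega> + grad_env lam \<phi> (z n \<omega>))"
    and x_def: "\<And>n \<omega>. x n \<omega> = prox lam \<phi> (z n \<omega>)"
    and g_meas: "\<And>n. g n \<in> borel_measurable (F (Suc n))"
    \<comment> \<open>(A.1)\<close>
    and A1: "\<And>y. \<phi> y \<noteq> \<infinity> \<Longrightarrow> ereal (f y) + \<phi> y \<ge> ereal psibar"
    \<comment> \<open>(A.2)\<close>
    and A2_int: "\<And>n b. b \<in> Basis \<Longrightarrow> integrable M (\<lambda>\<omega>. g n \<omega> \<bullet> b)"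
    and A2_unbiased: "\<And>n b. b \<in> Basis \<Longrightarrow>
          AE \<omega> in M. real_cond_exp M (F n) (\<lambda>\<omega>. g n \<omega> \<bullet> b) \<omega> = gf (x n \<omega>) \<bullet> b"
    and A2_var: "\<And>n. sigma n \<ge> 0"
    and A2_bound: "\<And>n. (\<integral>\<^sup>+ \<omega>. ennreal ((norm (g n \<omega> - gf (x n \<omega>)))^2) \<partial>M) \<le> ennreal ((sigma n)^2)"
    \<comment> \<open>(A.3)\<close>
    and A3_div: "\<not> summable alpha" and A3_lim: "alpha \<longlonglongrightarrow> 0"
    \<comment> \<open>(B.1)\<close>
    and L_pos: "L > 0"
    and B1: "\<And>y y'. norm (gf y - gf y') \<le> L * norm (y - y')"
    \<comment> \<open>step sizes\<close>
    and alpha_pos: "\<And>n. alpha n > 0"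
    and alpha_le: "\<And>n. alpha n \<le> T_const L lam / 5"
    and k_pos: "k \<ge> 1"
  shows "Min ((\<lambda>i. \<integral>\<^sup>+ \<omega>. ennreal ((norm (F_nat lam \<phi> gf (x i \<omega>)))^2) \<partial>M) ` {..<k})
     \<le> ennreal (
        (10 * (1 + lam * lambar_const L lam)^2 * lam^2 / xi_const L lam)
          * (H_merit (xi_const L lam) lam f gf \<phi> z0 - psibar) / (\<Sum>i<k. alpha i)
      + max (200 * (1 + lam * lambar_const L lam)^2 * lam^2 / (T_const L lam * xi_const L lam))
            (8 * lam^2 * (lambar_const L lam)^2 * T_const L lam)
          * (\<Sum>i<k. (alpha i)^2 * (sigma i)^2) / (\<Sum>i<k. alpha i))"
proof -
  have loc: "mainloc \<phi> lam f gf L psibar M F alpha sigma z0 z x g"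
  proof (intro mainloc.intro detloc.intro proxloc.intro detloc_axioms.intro mainloc_axioms.intro)
  qed (fact assms)+
  show ?thesis by (rule mainloc.final[OF loc k_pos])
qed

end
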